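(* Let $\kappa>0$ and $\mathcal{L}f=\frac{\kappa}{2}f''$. Let $\sigma:\mathbf{R}\to\mathbf{R}$ be Lipschitz with Lipschitz constant $\mathrm{Lip}_\sigma$, $\sigma(0)=0$, and $\inf_x|\sigma(x)/x|>0$. Let $u_0:\mathbf{R}\to\mathbf{R}_+$ be bounded and let $u$ be the mild solution of $\partial_tu_t(x)=\frac{\kappa}{2}\partial_x^2u_t(x)+\sigma(u_t(x))\,\partial^2_{tx}W(t,x)$ with initial datum $u_0$. If $\sup_{x\in\mathbf{R}}|e^{cx/2}u_0(x)|<\infty$ for some $c\in\mathbf{R}$, then for every $$\beta>\frac{\kappa c^2}{4}+\frac{\mathrm{Lip}_\sigma^4}{4\kappa}$$ there exists a finite constant $A_\beta$ such that $\mathrm{E}(|u_t(x)|^2)\le A_\beta\exp(\beta t-cx)$ uniformly for all $t\ge0$ and $x\in\mathbf{R}$.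
   Context: $W$ is a two-parameter Brownian sheet. The mild solution is the predictable random field $u$ with $u_t(x)=(P_tu_0)(x)+\int_{[0,t]\times\mathbf{R}}p_{t-s}(y-x)\sigma(u_s(y))\,W(ds\,dy)$, where $p_t(x)=(2\pi\kappa t)^{-1/2}e^{-x^2/(2\kappa t)}$ and $(P_tf)(x)=\int p_t(y-x)f(y)\,dy$. *)

theory Defs
  imports "HOL-Probability.Probability"
begin

definition heat_kernel :: "real \<Rightarrow> real \<Rightarrow> real \<Rightarrow> real" where
  "heat_kernel \<kappa> t x = exp (- (x^2) / (2 * \<kappa> * t)) / sqrt (2 * pi * \<kappa> * t)"

definition heat_sg :: "real \<Rightarrow> real \<Rightarrow> (real \<Rightarrow> real) \<Rightarrow> real \<Rightarrow> real" where
  "heat_sg \<kappa> t f x = (if t = 0 then f x else (LINT y|lborel. heat_kernel \<kappa> t (y - x) * f y))"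

definition rect_incr :: "(real \<Rightarrow> real \<Rightarrow> 'a \<Rightarrow> real) \<Rightarrow> real \<Rightarrow> real \<Rightarrow> real \<Rightarrow> real \<Rightarrow> 'a \<Rightarrow> real" where
  "rect_incr W a b x y \<omega> = W b y \<omega> - W b x \<omega> - W a y \<omega> + W a x \<omega>"

definition filtration_on :: "'a measure \<Rightarrow> (real \<Rightarrow> 'a set set) \<Rightarrow> bool" where
  "filtration_on M F \<longleftrightarrow>
     (\<forall>t. sigma_algebra (space M) (F t) \<and> F t \<subseteq> sets M) \<and> (\<forall>s t. s \<le> t \<longrightarrow> F s \<subseteq> F t)"

text \<open>Two-parameter Brownian sheet W(t,x), t \<ge> 0, x real, with respect to the filtration F:
  adapted, vanishing on the axes, and for 0 \<le> a < b the increments over disjoint rectangles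
  (a,b] x (x_i, x_(i+1)] are independent of each other and of F a, and centred normal with
  variance (b-a)(x_(i+1)-x_i).\<close>

definition brownian_sheet :: "'a measure \<Rightarrow> (real \<Rightarrow> 'a set set) \<Rightarrow> (real \<Rightarrow> real \<Rightarrow> 'a \<Rightarrow> real) \<Rightarrow> bool" where
  "brownian_sheet M F W \<longleftrightarrow>
     prob_space M \<and> filtration_on M F \<and>
     (\<forall>x \<omega>. W 0 x \<omega> = 0) \<and> (\<forall>t \<omega>. W t 0 \<omega> = 0) \<and>
     (\<forall>t x. 0 \<le> t \<longrightarrow> (\<forall>B\<in>sets borel. W t x -` B \<inter> space M \<in> F t)) \<and>
     (\<forall>a b (xs :: real list). 0 \<le> a \<longrightarrow> a < b \<longrightarrow> sorted_wrt (<) xs \<longrightarrow>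
        prob_space.indep_sets M
          (\<lambda>j. case j of None \<Rightarrow> F a
                | Some i \<Rightarrow> {rect_incr W a b (xs!i) (xs!Suc i) -` B \<inter> space M | B. B \<in> sets borel})
          (insert None (Some ` {..<length xs - 1})) \<and>
        (\<forall>i < length xs - 1. distributed M lborel (rect_incr W a b (xs!i) (xs!Suc i))
             (normal_density 0 (sqrt ((b - a) * (xs!Suc i - xs!i))))))"

definition predictable :: "'a measure \<Rightarrow> (real \<Rightarrow> 'a set set) \<Rightarrow> (real \<times> real \<times> 'a) measure" where
  "predictable M F = sigma (UNIV \<times> UNIV \<times> space M)
     ({{(s, y, \<omega>). a < s \<and> s \<le> b \<and> y \<in> B \<and> \<omega> \<in> G} | a b B G. 0 \<le> a \<and> B \<in> sets borel \<and> G \<in> F a}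
      \<union> {{(s, y, \<omega>). s = 0 \<and> y \<in> B \<and> \<omega> \<in> G} | B G. B \<in> sets borel \<and> G \<in> F 0})"

definition simple_pred :: "'a measure \<Rightarrow> (real \<Rightarrow> 'a set set) \<Rightarrow> nat \<Rightarrow> (nat \<Rightarrow> 'a \<Rightarrow> real)
    \<Rightarrow> (nat \<Rightarrow> real) \<Rightarrow> (nat \<Rightarrow> real) \<Rightarrow> (nat \<Rightarrow> real) \<Rightarrow> (nat \<Rightarrow> real) \<Rightarrow> bool" where
  "simple_pred M F n X a b x y \<longleftrightarrow>
     (\<forall>k<n. 0 \<le> a k \<and> a k < b k \<and> x k < y k \<and> (\<exists>C. \<forall>\<omega>\<in>space M. \<bar>X k \<omega>\<bar> \<le> C) \<and>
            (\<forall>B\<in>sets borel. X k -` B \<inter> space M \<in> F (a k)))"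

definition simple_fun_st :: "nat \<Rightarrow> (nat \<Rightarrow> 'a \<Rightarrow> real)
    \<Rightarrow> (nat \<Rightarrow> real) \<Rightarrow> (nat \<Rightarrow> real) \<Rightarrow> (nat \<Rightarrow> real) \<Rightarrow> (nat \<Rightarrow> real) \<Rightarrow> real \<Rightarrow> real \<Rightarrow> 'a \<Rightarrow> real" where
  "simple_fun_st n X a b x y s z \<omega> =
     (\<Sum>k<n. X k \<omega> * indicator {a k<..b k} s * indicator {x k<..y k} z)"

definition simple_int :: "(real \<Rightarrow> real \<Rightarrow> 'a \<Rightarrow> real) \<Rightarrow> nat \<Rightarrow> (nat \<Rightarrow> 'a \<Rightarrow> real)
    \<Rightarrow> (nat \<Rightarrow> real) \<Rightarrow> (nat \<Rightarrow> real) \<Rightarrow> (nat \<Rightarrow> real) \<Rightarrow> (nat \<Rightarrow> real) \<Rightarrow> 'a \<Rightarrow> real" where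
  "simple_int W n X a b x y \<omega> = (\<Sum>k<n. X k \<omega> * rect_incr W (a k) (b k) (x k) (y k) \<omega>)"

definition stoch_int :: "'a measure \<Rightarrow> (real \<Rightarrow> 'a set set) \<Rightarrow> (real \<Rightarrow> real \<Rightarrow> 'a \<Rightarrow> real)
    \<Rightarrow> (real \<Rightarrow> real \<Rightarrow> 'a \<Rightarrow> real) \<Rightarrow> ('a \<Rightarrow> real) \<Rightarrow> bool" where
  "stoch_int M F W f I \<longleftrightarrow> I \<in> borel_measurable M \<and>
     (\<exists>n X a b x y. (\<forall>m. simple_pred M F (n m) (X m) (a m) (b m) (x m) (y m)) \<and>
        ((\<lambda>m. \<integral>\<^sup>+\<omega>. \<integral>\<^sup>+s. \<integral>\<^sup>+z. ennreal ((simple_fun_st (n m) (X m) (a m) (b m) (x m) (y m) s z \<omega>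
              - f s z \<omega>)^2) \<partial>lborel \<partial>lborel \<partial>M) \<longlonglongrightarrow> 0) \<and>
        ((\<lambda>m. \<integral>\<^sup>+\<omega>. ennreal ((simple_int W (n m) (X m) (a m) (b m) (x m) (y m) \<omega> - I \<omega>)^2) \<partial>M)
            \<longlonglongrightarrow> 0))"

definition mild_solution :: "'a measure \<Rightarrow> (real \<Rightarrow> 'a set set) \<Rightarrow> (real \<Rightarrow> real \<Rightarrow> 'a \<Rightarrow> real)
    \<Rightarrow> real \<Rightarrow> (real \<Rightarrow> real) \<Rightarrow> (real \<Rightarrow> real) \<Rightarrow> (real \<Rightarrow> real \<Rightarrow> 'a \<Rightarrow> real) \<Rightarrow> bool" where
  "mild_solution M F W \<kappa> \<sigma> u0 u \<longleftrightarrow>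
     (\<lambda>(t, x, \<omega>). if 0 \<le> t then u t x \<omega> else 0) \<in> borel_measurable (predictable M F) \<and>
     (\<forall>T\<ge>0. \<exists>C::real. \<forall>t\<in>{0..T}. \<forall>x. (\<integral>\<^sup>+\<omega>. ennreal ((u t x \<omega>)^2) \<partial>M) \<le> ennreal C) \<and>
     (\<forall>t\<ge>0. \<forall>x. \<exists>I. stoch_int M F W
         (\<lambda>s y \<omega>. indicator {0..<t} s * heat_kernel \<kappa> (t - s) (y - x) * \<sigma> (u s y \<omega>)) I \<and>
       (AE \<omega> in M. u t x \<omega> = heat_sg \<kappa> t u0 x + I \<omega>))"

end

theory Submission
  imports Defs
begin


lemma bs_prob: "brownian_sheet M F W \<Longrightarrow> prob_space M"
  by (simp add: brownian_sheet_def)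

lemma bs_Fsub: "brownian_sheet M F W \<Longrightarrow> F t \<subseteq> sets M"
  by (simp add: brownian_sheet_def filtration_on_def)

lemma bs_Fmono: "brownian_sheet M F W \<Longrightarrow> s \<le> t \<Longrightarrow> F s \<subseteq> F t"
  by (simp add: brownian_sheet_def filtration_on_def)

lemma bs_Fsa: "brownian_sheet M F W \<Longrightarrow> sigma_algebra (space M) (F t)"
  by (simp add: brownian_sheet_def filtration_on_def)

definition Fmeas :: "'a measure \<Rightarrow> 'a set set \<Rightarrow> ('a \<Rightarrow> real) \<Rightarrow> bool" where
  "Fmeas M G Z \<longleftrightarrow> (\<forall>B\<in>sets borel. Z -` B \<inter> space M \<in> G)"

lemma Fmeas_meas:
  assumes "Fmeas M G Z" "G \<subseteq> sets M" shows "Z \<in> borel_measurable M"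
  using assms unfolding Fmeas_def by (intro measurableI) auto

lemma Fmeas_mono: "Fmeas M G Z \<Longrightarrow> G \<subseteq> H \<Longrightarrow> Fmeas M H Z"
  unfolding Fmeas_def by auto

lemma bs_adapted: "brownian_sheet M F W \<Longrightarrow> 0 \<le> t \<Longrightarrow> Fmeas M (F t) (W t x)"
  by (simp add: brownian_sheet_def Fmeas_def)

lemma bs_W_meas: "brownian_sheet M F W \<Longrightarrow> 0 \<le> t \<Longrightarrow> W t x \<in> borel_measurable M"
  using Fmeas_meas bs_adapted bs_Fsub by blast


lemma bs_indep_var:
  assumes W: "brownian_sheet M F W" and a: "0 \<le> a" "a < b" and xy: "x < y" and Z: "Fmeas M (F a) Z"
  shows "prob_space.indep_var M borel Z borel (rect_incr W a b x y)"
proof -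
  interpret prob_space M using W by (rule bs_prob)
  define D where "D = rect_incr W a b x y"
  define FF where "FF = (\<lambda>j. case j of None \<Rightarrow> F a
                | Some i \<Rightarrow> {rect_incr W a b ([x,y]!i) ([x,y]!Suc i) -` B \<inter> space M | B. B \<in> sets borel})"
  have ind: "indep_sets FF (insert None (Some ` {..<length [x,y] - 1}))"
  proof -
    have s: "sorted_wrt (<) [x,y]" using xy by simp
    show ?thesis using W a s unfolding brownian_sheet_def FF_def by blast
  qed
  have I: "insert None (Some ` {..<length [x,y] - 1}) = {None, Some 0}" by auto
  have ind2: "indep_sets FF {None, Some 0}" using ind I by simp
  have Dm: "D \<in> borel_measurable M"
    unfolding D_def rect_incr_def using bs_W_meas[OF W] a by auto
  have Zm: "Z \<in> borel_measurable M" using Fmeas_meas[OF Z bs_Fsub[OF W]] .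
  have eq: "(\<lambda>i. {case_bool Z D i -` A \<inter> space M |A. A \<in> sets (case_bool borel borel i)})
      = case_bool {Z -` A \<inter> space M |A. A \<in> sets borel} {D -` A \<inter> space M |A. A \<in> sets borel}"
    by (rule ext) (simp split: bool.split)
  have "indep_set {Z -` A \<inter> space M |A. A \<in> sets borel} {D -` A \<inter> space M |A. A \<in> sets borel}"
    unfolding indep_sets2_eq
  proof (intro conjI ballI)
    show "{Z -` A \<inter> space M |A. A \<in> sets borel} \<subseteq> events" using Zm by auto
    show "{D -` A \<inter> space M |A. A \<in> sets borel} \<subseteq> events" using Dm by auto
    fix p q assume p: "p \<in> {Z -` A \<inter> space M |A. A \<in> sets borel}" and q: "q \<in> {D -` A \<inter> space M |A. A \<in> sets borel}"
    have pF: "p \<in> FF None" using p Z unfolding FF_def Fmeas_def by auto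
    have qF: "q \<in> FF (Some 0)" using q unfolding FF_def D_def by auto
    have "prob (\<Inter>j\<in>{None, Some 0}. (case j of None \<Rightarrow> p | Some _ \<Rightarrow> q)) =
          (\<Prod>j\<in>{None, Some 0}. prob (case j of None \<Rightarrow> p | Some _ \<Rightarrow> q))"
      using indep_setsD[OF ind2, of "{None, Some 0}" "\<lambda>j. case j of None \<Rightarrow> p | Some _ \<Rightarrow> q"] pF qF by auto
    then show "prob (p \<inter> q) = prob p * prob q" by simp
  qed
  then have "indep_var borel Z borel D"
    unfolding indep_var_def indep_vars_def2 eq indep_set_def[symmetric]
    using Zm Dm by (auto split: bool.split)
  then show ?thesis unfolding D_def .
qed

lemma bs_distr:
  assumes W: "brownian_sheet M F W" and a: "0 \<le> a" "a < b" and xy: "x < y"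
  shows "distributed M lborel (rect_incr W a b x y) (normal_density 0 (sqrt ((b - a) * (y - x))))"
proof -
  have s: "sorted_wrt (<) [x,y]" using xy by simp
  have "\<forall>i < length [x,y] - 1. distributed M lborel (rect_incr W a b ([x,y]!i) ([x,y]!Suc i))
             (normal_density 0 (sqrt ((b - a) * ([x,y]!Suc i - [x,y]!i))))"
    using W a s unfolding brownian_sheet_def by blast
  then show ?thesis by simp
qed

lemma bs_moments:
  assumes W: "brownian_sheet M F W" and a: "0 \<le> a" "a < b" and xy: "x < y"
  shows "rect_incr W a b x y \<in> borel_measurable M"
    and "integrable M (rect_incr W a b x y)"
    and "integrable M (\<lambda>\<omega>. (rect_incr W a b x y \<omega>)^2)"
    and "(\<integral>\<omega>. rect_incr W a b x y \<omega> \<partial>M) = 0"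
    and "(\<integral>\<omega>. (rect_incr W a b x y \<omega>)^2 \<partial>M) = (b - a) * (y - x)"
proof -
  interpret prob_space M using W by (rule bs_prob)
  define \<sigma> where "\<sigma> = sqrt ((b - a) * (y - x))"
  have sp: "0 < \<sigma>" using a xy unfolding \<sigma>_def by simp
  have D: "distributed M lborel (rect_incr W a b x y) (normal_density 0 \<sigma>)"
    using bs_distr[OF W a xy] unfolding \<sigma>_def .
  show "rect_incr W a b x y \<in> borel_measurable M"
    using distributed_measurable[OF D] by simp
  have i1: "integrable lborel (\<lambda>x. normal_density 0 \<sigma> x * x)"
    using integrable_normal_moment[where \<mu>=0 and \<sigma>=\<sigma> and k=1] sp by simp
  show "integrable M (rect_incr W a b x y)"
    using distributed_integrable[OF D, of "\<lambda>x. x"] i1 by simp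
  have i2: "integrable lborel (\<lambda>x. normal_density 0 \<sigma> x * x^2)"
    using integrable_normal_moment[where \<mu>=0 and \<sigma>=\<sigma> and k=2] sp by simp
  show "integrable M (\<lambda>\<omega>. (rect_incr W a b x y \<omega>)^2)"
    using distributed_integrable[OF D, of "\<lambda>x. x^2"] i2 by simp
  have e: "expectation (rect_incr W a b x y) = 0"
    using normal_distributed_expectation[OF sp D] .
  then show "(\<integral>\<omega>. rect_incr W a b x y \<omega> \<partial>M) = 0" .
  have "variance (rect_incr W a b x y) = \<sigma>^2"
    using normal_distributed_variance[OF sp D] .
  then show "(\<integral>\<omega>. (rect_incr W a b x y \<omega>)^2 \<partial>M) = (b - a) * (y - x)"
    using e a xy unfolding \<sigma>_def by simp
qed

lemma bs_first:
  assumes W: "brownian_sheet M F W" and a: "0 \<le> a" "a < b" and xy: "x < y"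
    and Y: "Fmeas M (F a) Y" and Yi: "integrable M Y"
  shows "integrable M (\<lambda>\<omega>. Y \<omega> * rect_incr W a b x y \<omega>)"
    and "(\<integral>\<omega>. Y \<omega> * rect_incr W a b x y \<omega> \<partial>M) = 0"
proof -
  interpret prob_space M using W by (rule bs_prob)
  note iv = bs_indep_var[OF W a xy Y]
  note m = bs_moments[OF W a xy]
  show "integrable M (\<lambda>\<omega>. Y \<omega> * rect_incr W a b x y \<omega>)"
    using indep_var_integrable[OF iv Yi m(2)] .
  show "(\<integral>\<omega>. Y \<omega> * rect_incr W a b x y \<omega> \<partial>M) = 0"
    using indep_var_lebesgue_integral[OF iv Yi m(2)] m(4) by simp
qed

lemma bs_second:
  assumes W: "brownian_sheet M F W" and a: "0 \<le> a" "a < b" and xy: "x < y"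
    and Y: "Fmeas M (F a) Y" and Yi: "integrable M Y"
  shows "integrable M (\<lambda>\<omega>. Y \<omega> * (rect_incr W a b x y \<omega>)^2)"
    and "(\<integral>\<omega>. Y \<omega> * (rect_incr W a b x y \<omega>)^2 \<partial>M) = (\<integral>\<omega>. Y \<omega> \<partial>M) * ((b - a) * (y - x))"
proof -
  interpret prob_space M using W by (rule bs_prob)
  have iv: "indep_var borel Y borel (\<lambda>\<omega>. (rect_incr W a b x y \<omega>)^2)"
    using indep_var_compose[OF bs_indep_var[OF W a xy Y], of "\<lambda>x. x" borel "\<lambda>x. x^2" borel]
    by (simp add: comp_def)
  note m = bs_moments[OF W a xy]
  show "integrable M (\<lambda>\<omega>. Y \<omega> * (rect_incr W a b x y \<omega>)^2)"
    using indep_var_integrable[OF iv Yi m(3)] .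
  show "(\<integral>\<omega>. Y \<omega> * (rect_incr W a b x y \<omega>)^2 \<partial>M) = (\<integral>\<omega>. Y \<omega> \<partial>M) * ((b - a) * (y - x))"
    using indep_var_lebesgue_integral[OF iv Yi m(3)] m(5) by simp
qed



definition ov :: "real \<Rightarrow> real \<Rightarrow> real \<Rightarrow> real \<Rightarrow> real" where
  "ov a b a' b' = max 0 (min b b' - max a a')"

lemma ov_abs: "x \<le> y \<Longrightarrow> x' \<le> y' \<Longrightarrow>
  (\<bar>y - x'\<bar> + \<bar>x - y'\<bar> - \<bar>y - y'\<bar> - \<bar>x - x'\<bar>) / 2 = ov x y x' y'"
  unfolding ov_def by (cases "y \<le> y'"; cases "x \<le> x'"; cases "y \<le> x'"; cases "y' \<le> x") (auto simp: abs_if min_def max_def)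

lemma rect_zero1: "rect_incr W a a x y = (\<lambda>\<omega>. 0)"
  by (rule ext) (simp add: rect_incr_def)
lemma rect_zero2: "rect_incr W a b x x = (\<lambda>\<omega>. 0)"
  by (rule ext) (simp add: rect_incr_def)
lemma rect_time_add: "rect_incr W a c x y \<omega> = rect_incr W a b x y \<omega> + rect_incr W b c x y \<omega>"
  by (simp add: rect_incr_def)

lemma Fmeas_iff:
  assumes "sigma_algebra (space M) G"
  shows "Fmeas M G f \<longleftrightarrow> f \<in> borel_measurable (sigma (space M) G)"
proof -
  interpret sa: sigma_algebra "space M" G by (rule assms)
  have sub: "G \<subseteq> Pow (space M)" using sa.sets_into_space by auto
  have sp: "space (sigma (space M) G) = space M" using sub by simp
  have st: "sets (sigma (space M) G) = G" using assms sub
    by (simp add: sigma_algebra.sigma_sets_eq)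
  show ?thesis unfolding Fmeas_def measurable_def sp st by (auto simp: Pi_iff)
qed

lemma Fmeas_bs_iff: "brownian_sheet M F W \<Longrightarrow> Fmeas M (F t) f \<longleftrightarrow> f \<in> borel_measurable (sigma (space M) (F t))"
  by (rule Fmeas_iff[OF bs_Fsa])

lemma Fmeas_mult: "brownian_sheet M F W \<Longrightarrow> Fmeas M (F t) f \<Longrightarrow> Fmeas M (F t) g \<Longrightarrow> Fmeas M (F t) (\<lambda>\<omega>. f \<omega> * g \<omega>)"
  unfolding Fmeas_bs_iff by (rule borel_measurable_times)

lemma Fmeas_const: "brownian_sheet M F W \<Longrightarrow> Fmeas M (F t) (\<lambda>\<omega>. c)"
  unfolding Fmeas_bs_iff by simp

lemma Fmeas_rect: "brownian_sheet M F W \<Longrightarrow> 0 \<le> a \<Longrightarrow> a \<le> b \<Longrightarrow> b \<le> t \<Longrightarrow> Fmeas M (F t) (rect_incr W a b x y)"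
proof -
  assume W: "brownian_sheet M F W" and h: "0 \<le> a" "a \<le> b" "b \<le> t"
  have 1: "\<And>z. W b z \<in> borel_measurable (sigma (space M) (F t))"
  proof -
    fix z have "Fmeas M (F b) (W b z)" using bs_adapted[OF W] h by simp
    then have "Fmeas M (F t) (W b z)" using Fmeas_mono bs_Fmono[OF W] h by blast
    then show "W b z \<in> borel_measurable (sigma (space M) (F t))" using Fmeas_bs_iff[OF W] by blast
  qed
  have 2: "\<And>z. W a z \<in> borel_measurable (sigma (space M) (F t))"
  proof -
    fix z have "Fmeas M (F a) (W a z)" using bs_adapted[OF W] h by simp
    then have "Fmeas M (F t) (W a z)" using Fmeas_mono bs_Fmono[OF W] h by (meson order_trans)
    then show "W a z \<in> borel_measurable (sigma (space M) (F t))" using Fmeas_bs_iff[OF W] by blast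
  qed
  show ?thesis unfolding Fmeas_bs_iff[OF W] rect_incr_def using 1 2
    by (intro borel_measurable_add borel_measurable_diff)
qed

lemma rect_meas_sq:
  assumes W: "brownian_sheet M F W" and a: "0 \<le> a" "a \<le> b" and xy: "x \<le> y"
  shows "rect_incr W a b x y \<in> borel_measurable M"
    and "integrable M (\<lambda>\<omega>. (rect_incr W a b x y \<omega>)^2)"
proof -
  interpret prob_space M using W by (rule bs_prob)
  show "rect_incr W a b x y \<in> borel_measurable M"
  proof (cases "a < b \<and> x < y")
    case True then show ?thesis using bs_moments(1)[OF W a(1)] xy by auto
  next
    case False then have "a = b \<or> x = y" using a xy by auto
    then have "rect_incr W a b x y = (\<lambda>\<omega>. 0)" using rect_zero1 rect_zero2 by auto
    then show ?thesis by simp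
  qed
  show "integrable M (\<lambda>\<omega>. (rect_incr W a b x y \<omega>)^2)"
  proof (cases "a < b \<and> x < y")
    case True then show ?thesis using bs_moments(3)[OF W a(1)] xy by auto
  next
    case False then have "a = b \<or> x = y" using a xy by auto
    then have "rect_incr W a b x y = (\<lambda>\<omega>. 0)" using rect_zero1 rect_zero2 by auto
    then show ?thesis by simp
  qed
qed

lemma bdd_meas_int:
  assumes W: "brownian_sheet M F W" and Zm: "Z \<in> borel_measurable M" and Zb: "\<forall>\<omega>\<in>space M. \<bar>Z \<omega>\<bar> \<le> C"
    and a: "0 \<le> a" "a \<le> b" "x \<le> y" and a': "0 \<le> a'" "a' \<le> b'" "x' \<le> y'"
  shows "integrable M (\<lambda>\<omega>. Z \<omega> * rect_incr W a b x y \<omega> * rect_incr W a' b' x' y' \<omega>)"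
proof -
  interpret prob_space M using W by (rule bs_prob)
  note m1 = rect_meas_sq[OF W a] and m2 = rect_meas_sq[OF W a']
  show ?thesis
  proof (rule Bochner_Integration.integrable_bound)
    show "integrable M (\<lambda>\<omega>. C * ((rect_incr W a b x y \<omega>)^2 + (rect_incr W a' b' x' y' \<omega>)^2))"
      using m1(2) m2(2) by auto
    show "(\<lambda>\<omega>. Z \<omega> * rect_incr W a b x y \<omega> * rect_incr W a' b' x' y' \<omega>) \<in> borel_measurable M"
      using m1(1) m2(1) Zm by (intro borel_measurable_times)
    show "AE \<omega> in M. norm (Z \<omega> * rect_incr W a b x y \<omega> * rect_incr W a' b' x' y' \<omega>)
        \<le> norm (C * ((rect_incr W a b x y \<omega>)^2 + (rect_incr W a' b' x' y' \<omega>)^2))"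
    proof (rule AE_I2)
      fix \<omega> assume "\<omega> \<in> space M"
      then have z: "\<bar>Z \<omega>\<bar> \<le> C" using Zb by auto
      define p where "p = rect_incr W a b x y \<omega>"
      define q where "q = rect_incr W a' b' x' y' \<omega>"
      have pq: "\<bar>p * q\<bar> \<le> p^2 + q^2"
      proof -
        have "0 \<le> (\<bar>p\<bar> - \<bar>q\<bar>)^2" by simp
        then have "2 * (\<bar>p\<bar> * \<bar>q\<bar>) \<le> p^2 + q^2" by (simp add: power2_eq_square algebra_simps)
        moreover have "0 \<le> \<bar>p\<bar> * \<bar>q\<bar>" by simp
        ultimately show ?thesis unfolding abs_mult by linarith
      qed
      have "\<bar>Z \<omega> * p * q\<bar> = \<bar>Z \<omega>\<bar> * \<bar>p * q\<bar>" by (simp add: abs_mult)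
      also have "\<dots> \<le> C * (p^2 + q^2)" using z pq by (intro mult_mono) auto
      finally show "norm (Z \<omega> * p * q) \<le> norm (C * (p^2 + q^2))" by simp
    qed
  qed
qed



lemma bdd_mult_int:
  fixes Z f :: "'a \<Rightarrow> real"
  assumes Zm: "Z \<in> borel_measurable M" and Zb: "\<forall>\<omega>\<in>space M. \<bar>Z \<omega>\<bar> \<le> C" and f: "integrable M f"
  shows "integrable M (\<lambda>\<omega>. Z \<omega> * f \<omega>)"
proof (rule Bochner_Integration.integrable_bound)
  show "integrable M (\<lambda>\<omega>. C * f \<omega>)" using f by auto
  show "(\<lambda>\<omega>. Z \<omega> * f \<omega>) \<in> borel_measurable M" using Zm f by (intro borel_measurable_times) auto
  show "AE \<omega> in M. norm (Z \<omega> * f \<omega>) \<le> norm (C * f \<omega>)"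
  proof (rule AE_I2)
    fix \<omega> assume "\<omega> \<in> space M"
    then have z: "\<bar>Z \<omega>\<bar> \<le> C" using Zb by auto
    then have "\<bar>Z \<omega>\<bar> * \<bar>f \<omega>\<bar> \<le> C * \<bar>f \<omega>\<bar>" by (intro mult_right_mono) auto
    then show "norm (Z \<omega> * f \<omega>) \<le> norm (C * f \<omega>)" using z by (simp add: abs_mult)
  qed
qed

lemma rect_int:
  assumes W: "brownian_sheet M F W" and a: "0 \<le> a" "a \<le> b" and xy: "x \<le> y"
  shows "integrable M (rect_incr W a b x y)"
proof (cases "a < b \<and> x < y")
  case True then show ?thesis using bs_moments(2)[OF W a(1)] xy by auto
next
  case False then have "a = b \<or> x = y" using a xy by auto
  then have "rect_incr W a b x y = (\<lambda>\<omega>. 0)" using rect_zero1 rect_zero2 by auto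
  then show ?thesis by simp
qed

lemma TD:
  assumes W: "brownian_sheet M F W" and h: "0 \<le> a" "a \<le> b" "b \<le> a'" "a' \<le> b'" "x \<le> y" "x' \<le> y'"
    and Z: "Fmeas M (F a') Z" and Zb: "\<forall>\<omega>\<in>space M. \<bar>Z \<omega>\<bar> \<le> C"
  shows "(\<integral>\<omega>. Z \<omega> * rect_incr W a b x y \<omega> * rect_incr W a' b' x' y' \<omega> \<partial>M) = 0"
proof (cases "a' < b' \<and> x' < y'")
  case False then have "a' = b' \<or> x' = y'" using h by auto
  then have "rect_incr W a' b' x' y' = (\<lambda>\<omega>. 0)" using rect_zero1 rect_zero2 by auto
  then show ?thesis by simp
next
  case True
  have Zm: "Z \<in> borel_measurable M" using Fmeas_meas[OF Z bs_Fsub[OF W]] .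
  have Y: "Fmeas M (F a') (\<lambda>\<omega>. Z \<omega> * rect_incr W a b x y \<omega>)"
    using Fmeas_mult[OF W Z Fmeas_rect[OF W h(1,2,3)]] .
  have Yi: "integrable M (\<lambda>\<omega>. Z \<omega> * rect_incr W a b x y \<omega>)"
    using bdd_mult_int[OF Zm Zb rect_int[OF W h(1,2,5)]] .
  show ?thesis using bs_first(2)[OF W _ _ _ Y Yi] h True by auto
qed

lemma polar: "(z::real) * (B - A) * (D - E) = (z*(B-E)^2 + z*(A-D)^2 - z*(B-D)^2 - z*(A-E)^2) / 2"
  by (simp add: power2_eq_square algebra_simps)

lemma SI:
  assumes W: "brownian_sheet M F W" and a: "0 \<le> a" "a < b" and xy: "x \<le> y" "x' \<le> y'"
    and Z: "Fmeas M (F a) Z" and Zb: "\<forall>\<omega>\<in>space M. \<bar>Z \<omega>\<bar> \<le> C"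
  shows "(\<integral>\<omega>. Z \<omega> * rect_incr W a b x y \<omega> * rect_incr W a b x' y' \<omega> \<partial>M)
       = (\<integral>\<omega>. Z \<omega> \<partial>M) * (b - a) * ov x y x' y'"
proof -
  interpret prob_space M using W by (rule bs_prob)
  have Zm: "Z \<in> borel_measurable M" using Fmeas_meas[OF Z bs_Fsub[OF W]] .
  have Zi: "integrable M Z" using Zm Zb by (intro integrable_const_bound[where B=C]) auto
  define G where "G p \<omega> = W b p \<omega> - W a p \<omega>" for p \<omega>
  have R: "rect_incr W a b p q \<omega> = G q \<omega> - G p \<omega>" for p q \<omega> unfolding G_def rect_incr_def by simp
  have Q: "integrable M (\<lambda>\<omega>. Z \<omega> * (G q \<omega> - G p \<omega>)^2) \<and>
      (\<integral>\<omega>. Z \<omega> * (G q \<omega> - G p \<omega>)^2 \<partial>M) = (\<integral>\<omega>. Z \<omega> \<partial>M) * ((b - a) * \<bar>q - p\<bar>)" for p q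
  proof (cases p q rule: linorder_cases)
    case less
    then show ?thesis using bs_second[OF W a less Z Zi] unfolding R by simp
  next
    case equal then show ?thesis by simp
  next
    case greater
    have e: "(G q \<omega> - G p \<omega>)^2 = (rect_incr W a b q p \<omega>)^2" for \<omega> unfolding R by (simp add: power2_commute)
    show ?thesis using bs_second[OF W a greater Z Zi] greater unfolding e by simp
  qed
  have "(\<integral>\<omega>. Z \<omega> * rect_incr W a b x y \<omega> * rect_incr W a b x' y' \<omega> \<partial>M)
      = (\<integral>\<omega>. (Z \<omega> * (G y \<omega> - G x' \<omega>)^2 + Z \<omega> * (G x \<omega> - G y' \<omega>)^2
               - Z \<omega> * (G y \<omega> - G y' \<omega>)^2 - Z \<omega> * (G x \<omega> - G x' \<omega>)^2) / 2 \<partial>M)"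
    unfolding R by (rule Bochner_Integration.integral_cong[OF refl]) (rule polar)
  also have "\<dots> = ((\<integral>\<omega>. Z \<omega> * (G y \<omega> - G x' \<omega>)^2 \<partial>M) + (\<integral>\<omega>. Z \<omega> * (G x \<omega> - G y' \<omega>)^2 \<partial>M)
               - (\<integral>\<omega>. Z \<omega> * (G y \<omega> - G y' \<omega>)^2 \<partial>M) - (\<integral>\<omega>. Z \<omega> * (G x \<omega> - G x' \<omega>)^2 \<partial>M)) / 2"
    using Q by (simp add: integral_divide_zero)
  also have "\<dots> = (\<integral>\<omega>. Z \<omega> \<partial>M) * (b - a) * ((\<bar>y - x'\<bar> + \<bar>x - y'\<bar> - \<bar>y - y'\<bar> - \<bar>x - x'\<bar>) / 2)"
  proof -
    have q1: "(\<integral>\<omega>. Z \<omega> * (G y \<omega> - G x' \<omega>)^2 \<partial>M) = (\<integral>\<omega>. Z \<omega> \<partial>M) * ((b - a) * \<bar>y - x'\<bar>)"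
      using Q[of y x'] by (simp add: abs_minus_commute)
    have q2: "(\<integral>\<omega>. Z \<omega> * (G x \<omega> - G y' \<omega>)^2 \<partial>M) = (\<integral>\<omega>. Z \<omega> \<partial>M) * ((b - a) * \<bar>x - y'\<bar>)"
      using Q[of x y'] by (simp add: abs_minus_commute)
    have q3: "(\<integral>\<omega>. Z \<omega> * (G y \<omega> - G y' \<omega>)^2 \<partial>M) = (\<integral>\<omega>. Z \<omega> \<partial>M) * ((b - a) * \<bar>y - y'\<bar>)"
      using Q[of y y'] by (simp add: abs_minus_commute)
    have q4: "(\<integral>\<omega>. Z \<omega> * (G x \<omega> - G x' \<omega>)^2 \<partial>M) = (\<integral>\<omega>. Z \<omega> \<partial>M) * ((b - a) * \<bar>x - x'\<bar>)"
      using Q[of x x'] by (simp add: abs_minus_commute)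
    show ?thesis unfolding q1 q2 q3 q4 by (simp add: algebra_simps)
  qed
  also have "\<dots> = (\<integral>\<omega>. Z \<omega> \<partial>M) * (b - a) * ov x y x' y'" using ov_abs[OF xy] by simp
  finally show ?thesis .
qed

lemma int_split_add:
  "integrable M f \<Longrightarrow> integrable M g \<Longrightarrow> (\<And>\<omega>. h \<omega> = f \<omega> + g \<omega>) \<Longrightarrow>
   (\<integral>\<omega>. h \<omega> \<partial>M) = (\<integral>\<omega>. f \<omega> \<partial>M) + (\<integral>\<omega>. (g \<omega>::real) \<partial>M)"
proof -
  assume f: "integrable M f" and g: "integrable M g" and e: "\<And>\<omega>. h \<omega> = f \<omega> + g \<omega>"
  have "h = (\<lambda>\<omega>. f \<omega> + g \<omega>)" using e by auto
  then show ?thesis using Bochner_Integration.integral_add[OF f g] by simp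
qed

lemma SS:
  assumes W: "brownian_sheet M F W" and h: "0 \<le> a" "a \<le> b" "a \<le> b'" "x \<le> y" "x' \<le> y'"
    and Z: "Fmeas M (F a) Z" and Zb: "\<forall>\<omega>\<in>space M. \<bar>Z \<omega>\<bar> \<le> C"
  shows "(\<integral>\<omega>. Z \<omega> * rect_incr W a b x y \<omega> * rect_incr W a b' x' y' \<omega> \<partial>M)
       = (\<integral>\<omega>. Z \<omega> \<partial>M) * ov a b a b' * ov x y x' y'"
proof -
  have Zm: "Z \<in> borel_measurable M" using Fmeas_meas[OF Z bs_Fsub[OF W]] .
  note I = bdd_meas_int[OF W Zm Zb]
  show ?thesis
  proof (cases "a = b \<or> a = b'")
    case True
    then have "rect_incr W a b x y = (\<lambda>\<omega>. 0) \<or> rect_incr W a b' x' y' = (\<lambda>\<omega>. 0)"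
      using rect_zero1 by auto
    moreover have "ov a b a b' = 0" using True h unfolding ov_def by auto
    ultimately show ?thesis by auto
  next
    case False
    then have ab: "a < b" "a < b'" using h by auto
    show ?thesis
    proof (cases "b \<le> b'")
      case True
      have "(\<integral>\<omega>. Z \<omega> * rect_incr W a b x y \<omega> * rect_incr W a b' x' y' \<omega> \<partial>M)
          = (\<integral>\<omega>. Z \<omega> * rect_incr W a b x y \<omega> * rect_incr W a b x' y' \<omega> \<partial>M)
           + (\<integral>\<omega>. Z \<omega> * rect_incr W a b x y \<omega> * rect_incr W b b' x' y' \<omega> \<partial>M)"
        by (rule int_split_add[OF I I]) (use h True in \<open>auto simp: rect_time_add[of W a b' x' y' _ b] algebra_simps\<close>)
      also have "(\<integral>\<omega>. Z \<omega> * rect_incr W a b x y \<omega> * rect_incr W b b' x' y' \<omega> \<partial>M) = 0"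
        using TD[OF W h(1,2) order_refl True h(4,5) Fmeas_mono[OF Z bs_Fmono[OF W h(2)]] Zb] .
      also have "ov a b a b' = b - a" using True ab unfolding ov_def by auto
      ultimately show ?thesis using SI[OF W h(1) ab(1) h(4,5) Z Zb] by simp
    next
      case False
      then have bb: "b' < b" by simp
      have "(\<integral>\<omega>. Z \<omega> * rect_incr W a b x y \<omega> * rect_incr W a b' x' y' \<omega> \<partial>M)
          = (\<integral>\<omega>. Z \<omega> * rect_incr W a b' x y \<omega> * rect_incr W a b' x' y' \<omega> \<partial>M)
           + (\<integral>\<omega>. Z \<omega> * rect_incr W a b' x' y' \<omega> * rect_incr W b' b x y \<omega> \<partial>M)"
        by (rule int_split_add[OF I I]) (use h bb in \<open>auto simp: rect_time_add[of W a b x y _ b'] algebra_simps\<close>)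
      also have "(\<integral>\<omega>. Z \<omega> * rect_incr W a b' x' y' \<omega> * rect_incr W b' b x y \<omega> \<partial>M) = 0"
        using TD[OF W h(1,3) order_refl _ h(5,4) Fmeas_mono[OF Z bs_Fmono[OF W h(3)]] Zb] bb by simp
      also have "ov a b a b' = b' - a" using bb ab unfolding ov_def by auto
      ultimately show ?thesis using SI[OF W h(1) ab(2) h(4,5) Z Zb] by simp
    qed
  qed
qed

lemma pair_le:
  assumes W: "brownian_sheet M F W" and h: "0 \<le> a" "a \<le> b" "a \<le> a'" "a' \<le> b'" "x \<le> y" "x' \<le> y'"
    and Z: "Fmeas M (F a') Z" and Zb: "\<forall>\<omega>\<in>space M. \<bar>Z \<omega>\<bar> \<le> C"
  shows "(\<integral>\<omega>. Z \<omega> * rect_incr W a b x y \<omega> * rect_incr W a' b' x' y' \<omega> \<partial>M)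
       = (\<integral>\<omega>. Z \<omega> \<partial>M) * ov a b a' b' * ov x y x' y'"
proof -
  have Zm: "Z \<in> borel_measurable M" using Fmeas_meas[OF Z bs_Fsub[OF W]] .
  note I = bdd_meas_int[OF W Zm Zb]
  show ?thesis
  proof (cases "b \<le> a'")
    case True
    have "ov a b a' b' = 0" using True h unfolding ov_def by auto
    then show ?thesis using TD[OF W h(1,2) True h(4,5,6) Z Zb] by simp
  next
    case False
    then have ab: "a' < b" by simp
    have "(\<integral>\<omega>. Z \<omega> * rect_incr W a b x y \<omega> * rect_incr W a' b' x' y' \<omega> \<partial>M)
        = (\<integral>\<omega>. Z \<omega> * rect_incr W a a' x y \<omega> * rect_incr W a' b' x' y' \<omega> \<partial>M)
         + (\<integral>\<omega>. Z \<omega> * rect_incr W a' b x y \<omega> * rect_incr W a' b' x' y' \<omega> \<partial>M)"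
      by (rule int_split_add[OF I I]) (use h ab in \<open>auto simp: rect_time_add[of W a b x y _ a'] algebra_simps\<close>)
    also have "(\<integral>\<omega>. Z \<omega> * rect_incr W a a' x y \<omega> * rect_incr W a' b' x' y' \<omega> \<partial>M) = 0"
      using TD[OF W h(1,3) order_refl h(4,5,6) Z Zb] .
    also have "ov a b a' b' = ov a' b a' b'" using h unfolding ov_def by auto
    ultimately show ?thesis using SS[OF W _ _ h(4,5,6) Z Zb] h ab by simp
  qed
qed

lemma pair:
  assumes W: "brownian_sheet M F W" and h: "0 \<le> a" "a \<le> b" "0 \<le> a'" "a' \<le> b'" "x \<le> y" "x' \<le> y'"
    and Z: "Fmeas M (F (max a a')) Z" and Zb: "\<forall>\<omega>\<in>space M. \<bar>Z \<omega>\<bar> \<le> C"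
  shows "(\<integral>\<omega>. Z \<omega> * rect_incr W a b x y \<omega> * rect_incr W a' b' x' y' \<omega> \<partial>M)
       = (\<integral>\<omega>. Z \<omega> \<partial>M) * ov a b a' b' * ov x y x' y'"
proof (cases "a \<le> a'")
  case True
  then show ?thesis using pair_le[OF W h(1,2) True h(4,5,6) _ Zb] Z by (simp add: max_def)
next
  case False
  then have "a' \<le> a" by simp
  from pair_le[OF W h(3,4) this h(2,6,5) _ Zb] Z False
  have "(\<integral>\<omega>. Z \<omega> * rect_incr W a' b' x' y' \<omega> * rect_incr W a b x y \<omega> \<partial>M)
       = (\<integral>\<omega>. Z \<omega> \<partial>M) * ov a' b' a b * ov x' y' x y" by (simp add: max_def)
  moreover have "ov a' b' a b = ov a b a' b'" "ov x' y' x y = ov x y x' y'" unfolding ov_def by (auto simp: min.commute max.commute)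
  moreover have "(\<lambda>\<omega>. Z \<omega> * rect_incr W a' b' x' y' \<omega> * rect_incr W a b x y \<omega>) =
      (\<lambda>\<omega>. Z \<omega> * rect_incr W a b x y \<omega> * rect_incr W a' b' x' y' \<omega>)" by (auto simp: algebra_simps)
  ultimately show ?thesis by simp
qed



lemma ind_int:
  shows "integrable lborel (\<lambda>s::real. indicator {a<..b} s * indicator {a'<..b'} s :: real)"
    and "(\<integral>s. indicator {a<..b} s * indicator {a'<..b'} s \<partial>lborel) = ov a b a' b'"
proof -
  have e: "(\<lambda>s::real. indicator {a<..b} s * indicator {a'<..b'} s :: real) = indicator {max a a'<..min b b'}"
    by (rule ext) (auto simp: indicator_def)
  show "integrable lborel (\<lambda>s::real. indicator {a<..b} s * indicator {a'<..b'} s :: real)"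
    unfolding e
  proof (cases "max a a' \<le> min b b'")
    case True then show "integrable lborel (indicator {max a a'<..min b b'} :: real \<Rightarrow> real)"
      by (simp add: integrable_indicator_iff emeasure_lborel_Ioc)
  next
    case False then have "(indicator {max a a'<..min b b'} :: real \<Rightarrow> real) = (\<lambda>_. 0)"
      by (auto simp: indicator_def)
    then show "integrable lborel (indicator {max a a'<..min b b'} :: real \<Rightarrow> real)" by simp
  qed
  show "(\<integral>s. indicator {a<..b} s * indicator {a'<..b'} s \<partial>lborel) = ov a b a' b'"
    unfolding e ov_def
    by (cases "max a a' \<le> min b b'") (auto simp: max_def)
qed

lemma sum_layer:
  fixes c d :: "nat \<Rightarrow> nat \<Rightarrow> real" and f :: "nat \<Rightarrow> nat \<Rightarrow> 'a \<Rightarrow> real"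
  assumes i: "\<And>j k. integrable N (f j k)" and v: "\<And>j k. (\<integral>z. f j k z \<partial>N) = d j k"
    and nn: "\<And>z. z \<in> space N \<Longrightarrow> 0 \<le> (\<Sum>j<n. \<Sum>k<n. c j k * f j k z)"
  shows "(\<integral>\<^sup>+z. ennreal (\<Sum>j<n. \<Sum>k<n. c j k * f j k z) \<partial>N) = ennreal (\<Sum>j<n. \<Sum>k<n. c j k * d j k)"
proof -
  have I: "integrable N (\<lambda>z. \<Sum>j<n. \<Sum>k<n. c j k * f j k z)" using i by auto
  have "(\<integral>z. (\<Sum>j<n. \<Sum>k<n. c j k * f j k z) \<partial>N) = (\<Sum>j<n. \<Sum>k<n. c j k * d j k)"
    using i v by (simp add: Bochner_Integration.integral_sum integrable_sum)
  then show ?thesis using nn_integral_eq_integral[OF I] nn by (simp add: AE_I2)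
qed

lemma sq_sum: "(\<Sum>k<n. (f k :: real))^2 = (\<Sum>j<n. \<Sum>k<n. f j * f k)"
  by (simp add: power2_eq_square sum_product)

lemma sum_int:
  fixes c d :: "nat \<Rightarrow> nat \<Rightarrow> real" and f :: "nat \<Rightarrow> nat \<Rightarrow> 'a \<Rightarrow> real"
  assumes i: "\<And>j k. j < n \<Longrightarrow> k < n \<Longrightarrow> integrable N (f j k)"
    and v: "\<And>j k. j < n \<Longrightarrow> k < n \<Longrightarrow> (\<integral>z. f j k z \<partial>N) = d j k"
  shows "integrable N (\<lambda>z. \<Sum>j<n. \<Sum>k<n. c j k * f j k z)"
    and "(\<integral>z. (\<Sum>j<n. \<Sum>k<n. c j k * f j k z) \<partial>N) = (\<Sum>j<n. \<Sum>k<n. c j k * d j k)"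
proof -
  show I: "integrable N (\<lambda>z. \<Sum>j<n. \<Sum>k<n. c j k * f j k z)" using i
    by (intro Bochner_Integration.integrable_sum integrable_mult_right) auto
  have "(\<integral>z. (\<Sum>j<n. \<Sum>k<n. c j k * f j k z) \<partial>N) = (\<Sum>j<n. \<integral>z. (\<Sum>k<n. c j k * f j k z) \<partial>N)"
    using i by (intro Bochner_Integration.integral_sum Bochner_Integration.integrable_sum integrable_mult_right) auto
  also have "\<dots> = (\<Sum>j<n. \<Sum>k<n. c j k * d j k)"
  proof (rule sum.cong[OF refl])
    fix j assume j: "j \<in> {..<n}"
    have "(\<integral>z. (\<Sum>k<n. c j k * f j k z) \<partial>N) = (\<Sum>k<n. \<integral>z. c j k * f j k z \<partial>N)"
      using i j by (intro Bochner_Integration.integral_sum integrable_mult_right) auto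
    also have "\<dots> = (\<Sum>k<n. c j k * d j k)" using v j by (intro sum.cong) auto
    finally show "(\<integral>z. (\<Sum>k<n. c j k * f j k z) \<partial>N) = (\<Sum>k<n. c j k * d j k)" .
  qed
  finally show "(\<integral>z. (\<Sum>j<n. \<Sum>k<n. c j k * f j k z) \<partial>N) = (\<Sum>j<n. \<Sum>k<n. c j k * d j k)" .
qed

lemma simple_iso:
  assumes W: "brownian_sheet M F W" and sp: "simple_pred M F n X a b x y"
  shows "integrable M (\<lambda>\<omega>. (simple_int W n X a b x y \<omega>)^2)"
    and "(\<integral>\<^sup>+\<omega>. \<integral>\<^sup>+s. \<integral>\<^sup>+z. ennreal ((simple_fun_st n X a b x y s z \<omega>)^2) \<partial>lborel \<partial>lborel \<partial>M)
         = ennreal (\<integral>\<omega>. (simple_int W n X a b x y \<omega>)^2 \<partial>M)"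
proof -
  interpret prob_space M using W by (rule bs_prob)
  have h: "\<And>k. k < n \<Longrightarrow> 0 \<le> a k \<and> a k < b k \<and> x k < y k \<and> Fmeas M (F (a k)) (X k)"
    using sp unfolding simple_pred_def Fmeas_def by auto
  have "\<forall>k. \<exists>C. k < n \<longrightarrow> (\<forall>\<omega>\<in>space M. \<bar>X k \<omega>\<bar> \<le> C)"
    using sp unfolding simple_pred_def by auto
  then obtain Cf where Cf: "\<And>k \<omega>. k < n \<Longrightarrow> \<omega> \<in> space M \<Longrightarrow> \<bar>X k \<omega>\<bar> \<le> Cf k"
    by metis
  have Xm: "\<And>k. k < n \<Longrightarrow> X k \<in> borel_measurable M" using h Fmeas_meas bs_Fsub[OF W] by blast
  define c where "c j k \<omega> = X j \<omega> * X k \<omega>" for j k \<omega>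
  have cF: "Fmeas M (F (max (a j) (a k))) (c j k)" if "j < n" "k < n" for j k
  proof -
    have "Fmeas M (F (max (a j) (a k))) (X j)" using h[OF that(1)] Fmeas_mono bs_Fmono[OF W] by (meson max.cobounded1)
    moreover have "Fmeas M (F (max (a j) (a k))) (X k)" using h[OF that(2)] Fmeas_mono bs_Fmono[OF W] by (meson max.cobounded2)
    ultimately show ?thesis unfolding c_def by (rule Fmeas_mult[OF W])
  qed
  have cb: "\<forall>\<omega>\<in>space M. \<bar>c j k \<omega>\<bar> \<le> Cf j * Cf k" if "j < n" "k < n" for j k
  proof
    fix \<omega> assume "\<omega> \<in> space M"
    then have "\<bar>X j \<omega>\<bar> \<le> Cf j" "\<bar>X k \<omega>\<bar> \<le> Cf k" using Cf that by auto
    then show "\<bar>c j k \<omega>\<bar> \<le> Cf j * Cf k" unfolding c_def abs_mult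
      by (intro mult_mono) auto
  qed
  have cm: "c j k \<in> borel_measurable M" if "j < n" "k < n" for j k
    using Fmeas_meas[OF cF[OF that] bs_Fsub[OF W]] .
  have ci: "integrable M (c j k)" if "j < n" "k < n" for j k
    using cm[OF that] cb[OF that] by (intro integrable_const_bound[where B="Cf j * Cf k"]) auto
  define R where "R k \<omega> = rect_incr W (a k) (b k) (x k) (y k) \<omega>" for k \<omega>
  have S2: "(simple_int W n X a b x y \<omega>)^2 = (\<Sum>j<n. \<Sum>k<n. 1 * (c j k \<omega> * R j \<omega> * R k \<omega>))" for \<omega>
    unfolding simple_int_def sq_sum c_def R_def by (simp add: algebra_simps)
  have pr: "integrable M (\<lambda>\<omega>. c j k \<omega> * R j \<omega> * R k \<omega>) \<and>
            (\<integral>\<omega>. c j k \<omega> * R j \<omega> * R k \<omega> \<partial>M) = (\<integral>\<omega>. c j k \<omega> \<partial>M) * ov (a j) (b j) (a k) (b k) * ov (x j) (y j) (x k) (y k)"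
    if "j < n" "k < n" for j k
  proof -
    have hj: "0 \<le> a j" "a j \<le> b j" "x j \<le> y j" using h[OF that(1)] by auto
    have hk: "0 \<le> a k" "a k \<le> b k" "x k \<le> y k" using h[OF that(2)] by auto
    show ?thesis unfolding R_def
      using bdd_meas_int[OF W cm[OF that] cb[OF that] hj hk]
        pair[OF W hj(1,2) hk(1,2) hj(3) hk(3) cF[OF that] cb[OF that]] by simp
  qed
  have SI: "integrable M (\<lambda>\<omega>. (simple_int W n X a b x y \<omega>)^2)"
   and SV: "(\<integral>\<omega>. (simple_int W n X a b x y \<omega>)^2 \<partial>M) = (\<Sum>j<n. \<Sum>k<n. 1 *
        ((\<integral>\<omega>. c j k \<omega> \<partial>M) * ov (a j) (b j) (a k) (b k) * ov (x j) (y j) (x k) (y k)))"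
    unfolding S2 using sum_int[where n=n and N=M and c="\<lambda>j k. 1" and f="\<lambda>j k \<omega>. c j k \<omega> * R j \<omega> * R k \<omega>"
       and d="\<lambda>j k. (\<integral>\<omega>. c j k \<omega> \<partial>M) * ov (a j) (b j) (a k) (b k) * ov (x j) (y j) (x k) (y k)"] pr by auto
  then show "integrable M (\<lambda>\<omega>. (simple_int W n X a b x y \<omega>)^2)" by simp
  define I where "I k s = (indicator {a k<..b k} s :: real)" for k s
  define J where "J k z = (indicator {x k<..y k} z :: real)" for k z
  have phi2: "(simple_fun_st n X a b x y s z \<omega>)^2 = (\<Sum>j<n. \<Sum>k<n. (c j k \<omega> * I j s * I k s) * (J j z * J k z))" for s z \<omega>
    unfolding simple_fun_st_def sq_sum c_def I_def J_def by (simp add: algebra_simps)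
  have zl: "integrable lborel (\<lambda>z. (\<Sum>j<n. \<Sum>k<n. (c j k \<omega> * I j s * I k s) * (J j z * J k z)))"
     "(\<integral>z. (\<Sum>j<n. \<Sum>k<n. (c j k \<omega> * I j s * I k s) * (J j z * J k z)) \<partial>lborel)
        = (\<Sum>j<n. \<Sum>k<n. (c j k \<omega> * I j s * I k s) * ov (x j) (y j) (x k) (y k))" for s \<omega>
    using sum_int[of n lborel "\<lambda>j k z. J j z * J k z" "\<lambda>j k. ov (x j) (y j) (x k) (y k)"] ind_int
    unfolding J_def by auto
  have g1nn: "0 \<le> (\<Sum>j<n. \<Sum>k<n. (c j k \<omega> * I j s * I k s) * ov (x j) (y j) (x k) (y k))" for s \<omega>
    using zl(2)[of \<omega> s, symmetric] by (simp add: phi2[symmetric])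
  have Z: "(\<integral>\<^sup>+z. ennreal ((simple_fun_st n X a b x y s z \<omega>)^2) \<partial>lborel)
      = ennreal (\<Sum>j<n. \<Sum>k<n. (c j k \<omega> * ov (x j) (y j) (x k) (y k)) * (I j s * I k s))" for s \<omega>
  proof -
    have "(\<integral>\<^sup>+z. ennreal ((simple_fun_st n X a b x y s z \<omega>)^2) \<partial>lborel)
        = ennreal (\<integral>z. (simple_fun_st n X a b x y s z \<omega>)^2 \<partial>lborel)"
      unfolding phi2 using zl(1) by (intro nn_integral_eq_integral) (auto simp: phi2[symmetric])
    also have "\<dots> = ennreal (\<Sum>j<n. \<Sum>k<n. (c j k \<omega> * ov (x j) (y j) (x k) (y k)) * (I j s * I k s))"
      unfolding phi2 zl(2) by (simp add: algebra_simps)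
    finally show ?thesis .
  qed
  have sl: "integrable lborel (\<lambda>s. (\<Sum>j<n. \<Sum>k<n. (c j k \<omega> * ov (x j) (y j) (x k) (y k)) * (I j s * I k s)))"
     "(\<integral>s. (\<Sum>j<n. \<Sum>k<n. (c j k \<omega> * ov (x j) (y j) (x k) (y k)) * (I j s * I k s)) \<partial>lborel)
        = (\<Sum>j<n. \<Sum>k<n. (c j k \<omega> * ov (x j) (y j) (x k) (y k)) * ov (a j) (b j) (a k) (b k))" for \<omega>
    using sum_int[of n lborel "\<lambda>j k s. I j s * I k s" "\<lambda>j k. ov (a j) (b j) (a k) (b k)"] ind_int
    unfolding I_def by auto
  have g1nn': "0 \<le> (\<Sum>j<n. \<Sum>k<n. (c j k \<omega> * ov (x j) (y j) (x k) (y k)) * (I j s * I k s))" for s \<omega>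
    using g1nn[of \<omega> s] by (simp add: algebra_simps)
  have g2nn: "0 \<le> (\<Sum>j<n. \<Sum>k<n. (c j k \<omega> * ov (x j) (y j) (x k) (y k)) * ov (a j) (b j) (a k) (b k))" for \<omega>
  proof -
    have "0 \<le> (\<integral>s. (\<Sum>j<n. \<Sum>k<n. (c j k \<omega> * ov (x j) (y j) (x k) (y k)) * (I j s * I k s)) \<partial>lborel)"
      using g1nn' by (intro Bochner_Integration.integral_nonneg) auto
    then show ?thesis using sl(2)[of \<omega>] by simp
  qed
  have Ssl: "(\<integral>\<^sup>+s. \<integral>\<^sup>+z. ennreal ((simple_fun_st n X a b x y s z \<omega>)^2) \<partial>lborel \<partial>lborel)
      = ennreal (\<Sum>j<n. \<Sum>k<n. (ov (x j) (y j) (x k) (y k) * ov (a j) (b j) (a k) (b k)) * c j k \<omega>)" for \<omega>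
  proof -
    have "(\<integral>\<^sup>+s. \<integral>\<^sup>+z. ennreal ((simple_fun_st n X a b x y s z \<omega>)^2) \<partial>lborel \<partial>lborel)
      = (\<integral>\<^sup>+s. ennreal (\<Sum>j<n. \<Sum>k<n. (c j k \<omega> * ov (x j) (y j) (x k) (y k)) * (I j s * I k s)) \<partial>lborel)"
      unfolding Z ..
    also have "\<dots> = ennreal (\<integral>s. (\<Sum>j<n. \<Sum>k<n. (c j k \<omega> * ov (x j) (y j) (x k) (y k)) * (I j s * I k s)) \<partial>lborel)"
      using sl(1) g1nn' by (intro nn_integral_eq_integral) auto
    also have "\<dots> = ennreal (\<Sum>j<n. \<Sum>k<n. (ov (x j) (y j) (x k) (y k) * ov (a j) (b j) (a k) (b k)) * c j k \<omega>)"
      unfolding sl(2) by (simp add: algebra_simps)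
    finally show ?thesis .
  qed
  have wl: "integrable M (\<lambda>\<omega>. \<Sum>j<n. \<Sum>k<n. (ov (x j) (y j) (x k) (y k) * ov (a j) (b j) (a k) (b k)) * c j k \<omega>)"
    "(\<integral>\<omega>. (\<Sum>j<n. \<Sum>k<n. (ov (x j) (y j) (x k) (y k) * ov (a j) (b j) (a k) (b k)) * c j k \<omega>) \<partial>M)
      = (\<Sum>j<n. \<Sum>k<n. (ov (x j) (y j) (x k) (y k) * ov (a j) (b j) (a k) (b k)) * (\<integral>\<omega>. c j k \<omega> \<partial>M))"
    using sum_int[of n M c "\<lambda>j k. (\<integral>\<omega>. c j k \<omega> \<partial>M)"] ci by auto
  have g2nn': "0 \<le> (\<Sum>j<n. \<Sum>k<n. (ov (x j) (y j) (x k) (y k) * ov (a j) (b j) (a k) (b k)) * c j k \<omega>)" for \<omega>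
    using g2nn[of \<omega>] by (simp add: algebra_simps)
  have "(\<integral>\<^sup>+\<omega>. \<integral>\<^sup>+s. \<integral>\<^sup>+z. ennreal ((simple_fun_st n X a b x y s z \<omega>)^2) \<partial>lborel \<partial>lborel \<partial>M)
      = (\<integral>\<^sup>+\<omega>. ennreal (\<Sum>j<n. \<Sum>k<n. (ov (x j) (y j) (x k) (y k) * ov (a j) (b j) (a k) (b k)) * c j k \<omega>) \<partial>M)"
    unfolding Ssl ..
  also have "\<dots> = ennreal (\<integral>\<omega>. (\<Sum>j<n. \<Sum>k<n. (ov (x j) (y j) (x k) (y k) * ov (a j) (b j) (a k) (b k)) * c j k \<omega>) \<partial>M)"
    using wl(1) g2nn' by (intro nn_integral_eq_integral) auto
  also have "\<dots> = ennreal (\<integral>\<omega>. (simple_int W n X a b x y \<omega>)^2 \<partial>M)"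
    unfolding wl(2) SV by (simp add: algebra_simps)
  finally show "(\<integral>\<^sup>+\<omega>. \<integral>\<^sup>+s. \<integral>\<^sup>+z. ennreal ((simple_fun_st n X a b x y s z \<omega>)^2) \<partial>lborel \<partial>lborel \<partial>M)
         = ennreal (\<integral>\<omega>. (simple_int W n X a b x y \<omega>)^2 \<partial>M)" .
qed



definition L3 :: "'a measure \<Rightarrow> (real \<times> real \<times> 'a \<Rightarrow> ennreal) \<Rightarrow> ennreal" where
  "L3 M H = (\<integral>\<^sup>+\<omega>. \<integral>\<^sup>+s. \<integral>\<^sup>+z. H (s, z, \<omega>) \<partial>lborel \<partial>lborel \<partial>M)"

lemma L3_meas1:
  assumes [measurable]: "H \<in> borel_measurable (lborel \<Otimes>\<^sub>M lborel \<Otimes>\<^sub>M M)" and w: "\<omega> \<in> space M"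
  shows "(\<lambda>z. H (s, z, \<omega>)) \<in> borel_measurable lborel"
  using w by measurable

lemma L3_meas2:
  assumes [measurable]: "H \<in> borel_measurable (lborel \<Otimes>\<^sub>M lborel \<Otimes>\<^sub>M M)" and w: "\<omega> \<in> space M"
  shows "(\<lambda>s. \<integral>\<^sup>+z. H (s, z, \<omega>) \<partial>lborel) \<in> borel_measurable lborel"
proof -
  have "(\<lambda>(s,z). H (s, z, \<omega>)) \<in> borel_measurable (lborel \<Otimes>\<^sub>M lborel)" using w by measurable
  then show ?thesis by (rule lborel.borel_measurable_nn_integral)
qed

lemma L3_meas3:
  assumes [measurable]: "H \<in> borel_measurable (lborel \<Otimes>\<^sub>M lborel \<Otimes>\<^sub>M M)"
  shows "(\<lambda>\<omega>. \<integral>\<^sup>+s. \<integral>\<^sup>+z. H (s, z, \<omega>) \<partial>lborel \<partial>lborel) \<in> borel_measurable M"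
proof -
  have "(\<lambda>(p,z). H (snd p, z, fst p)) \<in> borel_measurable ((M \<Otimes>\<^sub>M lborel) \<Otimes>\<^sub>M lborel)" by measurable
  then have "(\<lambda>p. \<integral>\<^sup>+z. H (snd p, z, fst p) \<partial>lborel) \<in> borel_measurable (M \<Otimes>\<^sub>M lborel)"
    by (rule lborel.borel_measurable_nn_integral)
  then have "(\<lambda>(\<omega>,s). \<integral>\<^sup>+z. H (s, z, \<omega>) \<partial>lborel) \<in> borel_measurable (M \<Otimes>\<^sub>M lborel)"
    by (simp add: case_prod_beta')
  then show ?thesis by (rule lborel.borel_measurable_nn_integral)
qed

lemma L3_add:
  assumes h1: "H1 \<in> borel_measurable (lborel \<Otimes>\<^sub>M lborel \<Otimes>\<^sub>M M)"
    and h2: "H2 \<in> borel_measurable (lborel \<Otimes>\<^sub>M lborel \<Otimes>\<^sub>M M)"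
  shows "L3 M (\<lambda>p. H1 p + H2 p) = L3 M H1 + L3 M H2"
proof -
  have "L3 M (\<lambda>p. H1 p + H2 p) = (\<integral>\<^sup>+\<omega>. \<integral>\<^sup>+s. (\<integral>\<^sup>+z. H1 (s, z, \<omega>) \<partial>lborel) + (\<integral>\<^sup>+z. H2 (s, z, \<omega>) \<partial>lborel) \<partial>lborel \<partial>M)"
    unfolding L3_def
    by (intro nn_integral_cong nn_integral_add L3_meas1[OF h1] L3_meas1[OF h2]) auto
  also have "\<dots> = (\<integral>\<^sup>+\<omega>. (\<integral>\<^sup>+s. \<integral>\<^sup>+z. H1 (s, z, \<omega>) \<partial>lborel \<partial>lborel) + (\<integral>\<^sup>+s. \<integral>\<^sup>+z. H2 (s, z, \<omega>) \<partial>lborel \<partial>lborel) \<partial>M)"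
    by (intro nn_integral_cong nn_integral_add L3_meas2[OF h1] L3_meas2[OF h2]) auto
  also have "\<dots> = L3 M H1 + L3 M H2"
    unfolding L3_def by (intro nn_integral_add L3_meas3[OF h1] L3_meas3[OF h2])
  finally show ?thesis .
qed

lemma L3_cmult:
  assumes h: "H \<in> borel_measurable (lborel \<Otimes>\<^sub>M lborel \<Otimes>\<^sub>M M)"
  shows "L3 M (\<lambda>p. c * H p) = c * L3 M H"
proof -
  have "L3 M (\<lambda>p. c * H p) = (\<integral>\<^sup>+\<omega>. \<integral>\<^sup>+s. c * (\<integral>\<^sup>+z. H (s, z, \<omega>) \<partial>lborel) \<partial>lborel \<partial>M)"
    unfolding L3_def
    by (intro nn_integral_cong nn_integral_cmult L3_meas1[OF h]) auto
  also have "\<dots> = (\<integral>\<^sup>+\<omega>. c * (\<integral>\<^sup>+s. \<integral>\<^sup>+z. H (s, z, \<omega>) \<partial>lborel \<partial>lborel) \<partial>M)"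
    by (intro nn_integral_cong nn_integral_cmult L3_meas2[OF h]) auto
  also have "\<dots> = c * L3 M H"
    unfolding L3_def by (intro nn_integral_cmult L3_meas3[OF h])
  finally show ?thesis .
qed

lemma L3_mono: "(\<And>p. H1 p \<le> H2 p) \<Longrightarrow> L3 M H1 \<le> L3 M H2"
  unfolding L3_def by (intro nn_integral_mono) auto

lemma aux_lin: "- (m::real) \<le> A + B \<Longrightarrow> P = T - m + U \<Longrightarrow> R = T + A + U + B \<Longrightarrow> P \<le> R"
  by linarith

lemma sq_split:
  fixes p q \<eta> :: real assumes "\<eta> > 0"
  shows "p^2 \<le> (1 + \<eta>) * q^2 + (1 + 1/\<eta>) * (q - p)^2"
proof -
  have "0 \<le> (sqrt \<eta> * q + (q - p) / sqrt \<eta>)^2" by simp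
  also have "(sqrt \<eta> * q + (q - p) / sqrt \<eta>)^2 = \<eta> * q^2 + 2 * q * (q - p) + (q - p)^2 / \<eta>"
    using assms by (simp add: power2_eq_square field_simps)
  finally have "- (2 * q * (q - p)) \<le> \<eta> * q^2 + (q - p)^2 / \<eta>" by simp
  moreover have "p^2 = q^2 - 2 * q * (q - p) + (q - p)^2" by (simp add: power2_eq_square algebra_simps)
  moreover have "(1 + \<eta>) * q^2 + (1 + 1/\<eta>) * (q - p)^2 = q^2 + \<eta>*q^2 + (q-p)^2 + (q-p)^2/\<eta>"
    by (simp add: distrib_right)
  ultimately show ?thesis
    using aux_lin[of "2 * q * (q - p)" "\<eta> * q^2" "(q - p)^2 / \<eta>" "p^2" "q^2" "(q-p)^2"] by simp
qed

lemma ennreal_sq_split: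
  fixes p q \<eta> :: real assumes "\<eta> > 0"
  shows "ennreal (p^2) \<le> ennreal (1 + \<eta>) * ennreal (q^2) + ennreal (1 + 1/\<eta>) * ennreal ((q - p)^2)"
proof -
  have "ennreal (p^2) \<le> ennreal ((1 + \<eta>) * q^2 + (1 + 1/\<eta>) * (q - p)^2)"
    using sq_split[OF assms] by (rule ennreal_leI)
  also have "\<dots> = ennreal (1 + \<eta>) * ennreal (q^2) + ennreal (1 + 1/\<eta>) * ennreal ((q - p)^2)"
    using assms by (simp add: ennreal_plus[symmetric] ennreal_mult[symmetric] del: ennreal_plus)
  finally show ?thesis .
qed

lemma simple_fun_meas:
  assumes sp: "simple_pred M F n X a b x y" and Fs: "\<And>t. F t \<subseteq> sets M"
  shows "(\<lambda>(s, z, \<omega>). simple_fun_st n X a b x y s z \<omega>) \<in> borel_measurable (lborel \<Otimes>\<^sub>M lborel \<Otimes>\<^sub>M M)"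
proof -
  have Xm: "X k \<in> borel_measurable M" if "k < n" for k
  proof -
    have "Fmeas M (F (a k)) (X k)" using sp that unfolding simple_pred_def Fmeas_def by auto
    then show ?thesis using Fmeas_meas Fs by blast
  qed
  have "(\<lambda>p. \<Sum>k<n. X k (snd (snd p)) * indicator {a k<..b k} (fst p) * indicator {x k<..y k} (fst (snd p)))
        \<in> borel_measurable (lborel \<Otimes>\<^sub>M lborel \<Otimes>\<^sub>M M)"
  proof (rule borel_measurable_sum)
    fix k assume "k \<in> {..<n}"
    then have [measurable]: "X k \<in> borel_measurable M" using Xm by auto
    show "(\<lambda>p. X k (snd (snd p)) * indicator {a k<..b k} (fst p) * indicator {x k<..y k} (fst (snd p)))
        \<in> borel_measurable (lborel \<Otimes>\<^sub>M lborel \<Otimes>\<^sub>M M)" by measurable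
  qed
  then show ?thesis unfolding simple_fun_st_def by (simp add: case_prod_beta')
qed

lemma simple_int_meas:
  assumes W: "brownian_sheet M F W" and sp: "simple_pred M F n X a b x y"
  shows "simple_int W n X a b x y \<in> borel_measurable M"
proof -
  have "(\<lambda>\<omega>. \<Sum>k<n. X k \<omega> * rect_incr W (a k) (b k) (x k) (y k) \<omega>) \<in> borel_measurable M"
  proof (rule borel_measurable_sum)
    fix k assume "k \<in> {..<n}"
    then have h: "0 \<le> a k" "a k \<le> b k" "x k \<le> y k" "Fmeas M (F (a k)) (X k)"
      using sp unfolding simple_pred_def Fmeas_def by auto
    show "(\<lambda>\<omega>. X k \<omega> * rect_incr W (a k) (b k) (x k) (y k) \<omega>) \<in> borel_measurable M"
      using Fmeas_meas[OF h(4) bs_Fsub[OF W]] rect_meas_sq(1)[OF W h(1,2,3)] by (rule borel_measurable_times)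
  qed
  then show ?thesis unfolding simple_int_def .
qed



lemma ennreal_eps_bound:
  fixes A B :: ennreal
  assumes h: "\<And>\<eta>::real. \<eta> > 0 \<Longrightarrow> A \<le> ennreal ((1 + \<eta>)^2) * B"
  shows "A \<le> B"
proof (cases "B = \<top>")
  case True then show ?thesis by simp
next
  case False
  then obtain b where b: "B = ennreal b" "0 \<le> b" by (cases B) auto
  show ?thesis
  proof (rule ennreal_le_epsilon)
    fix e :: real assume e: "B < top" "0 < e"
    define \<eta> where "\<eta> = min 1 (e / (3 * (b + 1)))"
    have e: "0 < e" using e by simp
    have \<eta>: "0 < \<eta>" "\<eta> \<le> 1" "\<eta> \<le> e / (3 * (b + 1))" using e b unfolding \<eta>_def by auto
    have "(1 + \<eta>)^2 * b = b + (2 * \<eta> + \<eta> * \<eta>) * b" by (simp add: power2_eq_square algebra_simps)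
    also have "\<dots> \<le> b + 3 * \<eta> * b" using \<eta> b by (intro add_left_mono mult_right_mono) auto
    also have "3 * \<eta> * b \<le> 3 * (e / (3 * (b + 1))) * b" using \<eta> b by (intro mult_right_mono) auto
    also have "3 * (e / (3 * (b + 1))) * b \<le> e" using e b by (simp add: field_simps)
    finally have le: "(1 + \<eta>)^2 * b \<le> b + e" by simp
    have "A \<le> ennreal ((1 + \<eta>)^2) * B" using h \<eta> by simp
    also have "\<dots> = ennreal ((1 + \<eta>)^2 * b)" using b by (simp add: ennreal_mult)
    also have "\<dots> \<le> ennreal (b + e)" using le by (rule ennreal_leI)
    also have "\<dots> = B + ennreal e" using b e by simp
    finally show "A \<le> B + ennreal e" .
  qed
qed

lemma stoch_int_bound:
  assumes W: "brownian_sheet M F W"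
    and fm: "(\<lambda>(s, z, \<omega>). f s z \<omega>) \<in> borel_measurable (lborel \<Otimes>\<^sub>M lborel \<Otimes>\<^sub>M M)"
    and SI: "stoch_int M F W f I"
  shows "(\<integral>\<^sup>+\<omega>. ennreal ((I \<omega>)^2) \<partial>M) \<le> L3 M (\<lambda>(s, z, \<omega>). ennreal ((f s z \<omega>)^2))"
proof -
  interpret prob_space M using W by (rule bs_prob)
  from SI obtain n X a b x y where Im: "I \<in> borel_measurable M"
    and sp: "\<And>m. simple_pred M F (n m) (X m) (a m) (b m) (x m) (y m)"
    and c1: "(\<lambda>m. \<integral>\<^sup>+\<omega>. \<integral>\<^sup>+s. \<integral>\<^sup>+z. ennreal ((simple_fun_st (n m) (X m) (a m) (b m) (x m) (y m) s z \<omega>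
              - f s z \<omega>)^2) \<partial>lborel \<partial>lborel \<partial>M) \<longlonglongrightarrow> 0"
    and c2: "(\<lambda>m. \<integral>\<^sup>+\<omega>. ennreal ((simple_int W (n m) (X m) (a m) (b m) (x m) (y m) \<omega> - I \<omega>)^2) \<partial>M)
            \<longlonglongrightarrow> 0"
    unfolding stoch_int_def by blast
  define \<phi> where "\<phi> m s z \<omega> = simple_fun_st (n m) (X m) (a m) (b m) (x m) (y m) s z \<omega>" for m s z \<omega>
  define S where "S m \<omega> = simple_int W (n m) (X m) (a m) (b m) (x m) (y m) \<omega>" for m \<omega>
  define e where "e m = L3 M (\<lambda>(s, z, \<omega>). ennreal ((\<phi> m s z \<omega> - f s z \<omega>)^2))" for m
  define d where "d m = (\<integral>\<^sup>+\<omega>. ennreal ((S m \<omega> - I \<omega>)^2) \<partial>M)" for m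
  define B where "B = L3 M (\<lambda>(s, z, \<omega>). ennreal ((f s z \<omega>)^2))"
  have e0: "e \<longlonglongrightarrow> 0" using c1 unfolding e_def L3_def \<phi>_def by simp
  have d0: "d \<longlonglongrightarrow> 0" using c2 unfolding d_def S_def by simp
  have phim: "(\<lambda>(s, z, \<omega>). \<phi> m s z \<omega>) \<in> borel_measurable (lborel \<Otimes>\<^sub>M lborel \<Otimes>\<^sub>M M)" for m
    unfolding \<phi>_def by (rule simple_fun_meas[OF sp bs_Fsub[OF W]])
  have Sm: "S m \<in> borel_measurable M" for m unfolding S_def by (rule simple_int_meas[OF W sp])
  have fm'[measurable]: "(\<lambda>x. f (fst x) (fst (snd x)) (snd (snd x))) \<in> borel_measurable (lborel \<Otimes>\<^sub>M lborel \<Otimes>\<^sub>M M)"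
    using fm by (simp add: case_prod_beta')
  have phim'[measurable]: "(\<lambda>x. \<phi> m (fst x) (fst (snd x)) (snd (snd x))) \<in> borel_measurable (lborel \<Otimes>\<^sub>M lborel \<Otimes>\<^sub>M M)" for m
    using phim[of m] by (simp add: case_prod_beta')
  have iso: "(\<integral>\<^sup>+\<omega>. ennreal ((S m \<omega>)^2) \<partial>M) = L3 M (\<lambda>(s, z, \<omega>). ennreal ((\<phi> m s z \<omega>)^2))" for m
  proof -
    have "(\<integral>\<^sup>+\<omega>. ennreal ((S m \<omega>)^2) \<partial>M) = ennreal (\<integral>\<omega>. (S m \<omega>)^2 \<partial>M)"
      using simple_iso(1)[OF W sp] unfolding S_def by (intro nn_integral_eq_integral) auto
    also have "\<dots> = L3 M (\<lambda>(s, z, \<omega>). ennreal ((\<phi> m s z \<omega>)^2))"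
      using simple_iso(2)[OF W sp, of m] unfolding L3_def \<phi>_def S_def by simp
    finally show ?thesis .
  qed
  have key: "(\<integral>\<^sup>+\<omega>. ennreal ((I \<omega>)^2) \<partial>M) \<le> ennreal ((1 + \<eta>)^2) * B" if \<eta>: "\<eta> > 0" for \<eta>
  proof -
    define c1 where "c1 = ennreal (1 + \<eta>)"
    define c2 where "c2 = ennreal (1 + 1/\<eta>)"
    have bnd: "(\<integral>\<^sup>+\<omega>. ennreal ((I \<omega>)^2) \<partial>M) \<le> c1 * (c1 * B + c2 * e m) + c2 * d m" for m
    proof -
      have "(\<integral>\<^sup>+\<omega>. ennreal ((I \<omega>)^2) \<partial>M) \<le>
          (\<integral>\<^sup>+\<omega>. c1 * ennreal ((S m \<omega>)^2) + c2 * ennreal ((S m \<omega> - I \<omega>)^2) \<partial>M)"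
        unfolding c1_def c2_def by (intro nn_integral_mono ennreal_sq_split \<eta>)
      also have "\<dots> = c1 * (\<integral>\<^sup>+\<omega>. ennreal ((S m \<omega>)^2) \<partial>M) + c2 * d m"
        unfolding d_def using Sm Im by (subst nn_integral_add) (auto simp: nn_integral_cmult)
      also have "(\<integral>\<^sup>+\<omega>. ennreal ((S m \<omega>)^2) \<partial>M) \<le> c1 * B + c2 * e m"
      proof -
        have "L3 M (\<lambda>(s, z, \<omega>). ennreal ((\<phi> m s z \<omega>)^2)) \<le>
            L3 M (\<lambda>p. c1 * (case p of (s, z, \<omega>) \<Rightarrow> ennreal ((f s z \<omega>)^2))
                     + c2 * (case p of (s, z, \<omega>) \<Rightarrow> ennreal ((\<phi> m s z \<omega> - f s z \<omega>)^2)))"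
        proof (rule L3_mono)
          fix p :: "real \<times> real \<times> 'a"
          obtain s z \<omega> where p: "p = (s, z, \<omega>)" by (cases p) auto
          show "(case p of (s, z, \<omega>) \<Rightarrow> ennreal ((\<phi> m s z \<omega>)^2)) \<le>
             c1 * (case p of (s, z, \<omega>) \<Rightarrow> ennreal ((f s z \<omega>)^2))
                     + c2 * (case p of (s, z, \<omega>) \<Rightarrow> ennreal ((\<phi> m s z \<omega> - f s z \<omega>)^2))"
            unfolding p c1_def c2_def using ennreal_sq_split[OF \<eta>, of "\<phi> m s z \<omega>" "f s z \<omega>"]
            by (simp add: power2_commute)
        qed
        also have "\<dots> = c1 * B + c2 * e m"
        proof -
          have m1: "(\<lambda>p. c1 * (case p of (s, z, \<omega>) \<Rightarrow> ennreal ((f s z \<omega>)^2))) \<in> borel_measurable (lborel \<Otimes>\<^sub>M lborel \<Otimes>\<^sub>M M)"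
            using fm by measurable
          have m2: "(\<lambda>p. c2 * (case p of (s, z, \<omega>) \<Rightarrow> ennreal ((\<phi> m s z \<omega> - f s z \<omega>)^2))) \<in> borel_measurable (lborel \<Otimes>\<^sub>M lborel \<Otimes>\<^sub>M M)"
            using fm phim[of m] by measurable
          have m3: "(\<lambda>p. (case p of (s, z, \<omega>) \<Rightarrow> ennreal ((f s z \<omega>)^2))) \<in> borel_measurable (lborel \<Otimes>\<^sub>M lborel \<Otimes>\<^sub>M M)"
            using fm by measurable
          have m4: "(\<lambda>p. (case p of (s, z, \<omega>) \<Rightarrow> ennreal ((\<phi> m s z \<omega> - f s z \<omega>)^2))) \<in> borel_measurable (lborel \<Otimes>\<^sub>M lborel \<Otimes>\<^sub>M M)"
            using fm phim[of m] by measurable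
          show ?thesis unfolding L3_add[OF m1 m2] L3_cmult[OF m3] L3_cmult[OF m4] B_def e_def by simp
        qed
        finally show ?thesis using iso[of m] by simp
      qed
      then have "c1 * (\<integral>\<^sup>+\<omega>. ennreal ((S m \<omega>)^2) \<partial>M) + c2 * d m \<le> c1 * (c1 * B + c2 * e m) + c2 * d m"
        by (intro add_right_mono mult_left_mono) auto
      finally show ?thesis .
    qed
    have lim: "(\<lambda>m. c1 * (c1 * B + c2 * e m) + c2 * d m) \<longlonglongrightarrow> c1 * (c1 * B + c2 * 0) + c2 * 0"
      unfolding c1_def c2_def
      by (intro tendsto_add tendsto_const ennreal_tendsto_cmult e0 d0) auto
    have "(\<integral>\<^sup>+\<omega>. ennreal ((I \<omega>)^2) \<partial>M) \<le> c1 * (c1 * B + c2 * 0) + c2 * 0"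
      using bnd by (intro LIMSEQ_le_const[OF lim]) auto
    also have "\<dots> = ennreal ((1 + \<eta>)^2) * B" unfolding c1_def using \<eta>
      by (simp add: power2_eq_square ennreal_mult mult.assoc)
    finally show ?thesis .
  qed
  show ?thesis using ennreal_eps_bound[OF key] unfolding B_def .
qed



lemma hk_nd: "0 < \<kappa> \<Longrightarrow> 0 < r \<Longrightarrow> heat_kernel \<kappa> r w = normal_density 0 (sqrt (\<kappa> * r)) w"
  unfolding heat_kernel_def normal_density_def by (simp add: field_simps)

lemma hk_nonneg: "0 \<le> \<kappa> \<Longrightarrow> 0 \<le> r \<Longrightarrow> 0 \<le> heat_kernel \<kappa> r w"
  unfolding heat_kernel_def by simp

lemma hk_sq:
  assumes k: "0 < \<kappa>" and r: "0 < r"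
  shows "(heat_kernel \<kappa> r w)^2 * exp (- c * w)
       = exp (c^2 * \<kappa> * r / 4) / (2 * sqrt (pi * \<kappa> * r)) * normal_density (- c * \<kappa> * r / 2) (sqrt (\<kappa> * r / 2)) w"
proof -
  have pkr: "0 < pi * \<kappa> * r" using k r by simp
  have L: "(heat_kernel \<kappa> r w)^2 * exp (- c * w) = exp (- (w^2) / (\<kappa> * r) - c * w) / (2 * pi * \<kappa> * r)"
  proof -
    have "(heat_kernel \<kappa> r w)^2 = (exp (- (w^2) / (2 * \<kappa> * r)))^2 / (sqrt (2 * pi * \<kappa> * r))^2"
      unfolding heat_kernel_def by (simp add: power_divide)
    also have "(exp (- (w^2) / (2 * \<kappa> * r)))^2 = exp (- (w^2) / (\<kappa> * r))"
    proof -
      have "(exp (- (w^2) / (2 * \<kappa> * r)))^2 = exp (- (w^2) / (2 * \<kappa> * r) + - (w^2) / (2 * \<kappa> * r))"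
        by (simp add: power2_eq_square mult_exp_exp)
      also have "- (w^2) / (2 * \<kappa> * r) + - (w^2) / (2 * \<kappa> * r) = - (w^2) / (\<kappa> * r)"
        using k r by (simp add: field_simps)
      finally show ?thesis .
    qed
    also have "(sqrt (2 * pi * \<kappa> * r))^2 = 2 * pi * \<kappa> * r" using pkr by simp
    finally show ?thesis by (simp add: exp_diff exp_minus field_simps)
  qed
  have R: "exp (c^2 * \<kappa> * r / 4) / (2 * sqrt (pi * \<kappa> * r)) * normal_density (- c * \<kappa> * r / 2) (sqrt (\<kappa> * r / 2)) w
      = exp (c^2 * \<kappa> * r / 4 - (w + c * \<kappa> * r / 2)^2 / (\<kappa> * r)) / (2 * pi * \<kappa> * r)"
  proof -
    have s1: "(sqrt (\<kappa> * r / 2))^2 = \<kappa> * r / 2" using k r by simp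
    have nd: "normal_density (- c * \<kappa> * r / 2) (sqrt (\<kappa> * r / 2)) w
        = exp (- ((w + c * \<kappa> * r / 2)^2 / (\<kappa> * r))) / sqrt (pi * \<kappa> * r)"
      unfolding normal_density_def s1 by (simp add: mult.assoc)
    have g: "exp A / (2 * sqrt Q) * (exp (- B) / sqrt Q) = exp (A - B) / (2 * Q)" if "0 < Q" for A B Q :: real
    proof -
      have "sqrt Q * sqrt Q = Q" using that by simp
      moreover have "exp (A - B) = exp A * exp (- B)" by (simp add: exp_add[symmetric])
      ultimately show ?thesis using that by (simp add: field_simps)
    qed
    show ?thesis unfolding nd using g[OF pkr] by (simp add: mult.assoc)
  qed
  have E: "c^2 * \<kappa> * r / 4 - ((w + c * \<kappa> * r / 2)^2) / (\<kappa> * r) = - (w^2) / (\<kappa> * r) - c * w"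
    using k r by (simp add: field_simps power2_eq_square)
  show ?thesis unfolding L R E ..
qed

lemma hk_lin:
  assumes k: "0 < \<kappa>" and r: "0 < r"
  shows "heat_kernel \<kappa> r w * exp (- c * w / 2)
       = exp (c^2 * \<kappa> * r / 8) * normal_density (- c * \<kappa> * r / 2) (sqrt (\<kappa> * r)) w"
proof -
  have s1: "(sqrt (\<kappa> * r))^2 = \<kappa> * r" using k r by simp
  have E: "c^2 * \<kappa> * r / 8 + (- ((w + c * \<kappa> * r / 2)^2) / (2 * (\<kappa> * r))) = - (w^2) / (2 * \<kappa> * r) - c * w / 2"
    using k r by (simp add: field_simps power2_eq_square)
  have "exp (c^2 * \<kappa> * r / 8) * normal_density (- c * \<kappa> * r / 2) (sqrt (\<kappa> * r)) w
      = exp (c^2 * \<kappa> * r / 8 + (- ((w + c * \<kappa> * r / 2)^2) / (2 * (\<kappa> * r)))) / sqrt (2 * pi * (\<kappa> * r))"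
  proof -
    have "exp (c^2 * \<kappa> * r / 8 + (- ((w + c * \<kappa> * r / 2)^2) / (2 * (\<kappa> * r))))
        = exp (c^2 * \<kappa> * r / 8) * exp (- ((w + c * \<kappa> * r / 2)^2) / (2 * (\<kappa> * r)))"
      by (rule exp_add)
    then show ?thesis unfolding normal_density_def s1 by (simp add: mult.assoc)
  qed
  also have "\<dots> = exp (- (w^2) / (2 * \<kappa> * r) - c * w / 2) / sqrt (2 * pi * (\<kappa> * r))" unfolding E ..
  also have "\<dots> = exp (- (w^2) / (2 * \<kappa> * r)) * exp (- c * w / 2) / sqrt (2 * pi * (\<kappa> * r))"
    by (simp add: exp_add[symmetric])
  also have "\<dots> = heat_kernel \<kappa> r w * exp (- c * w / 2)"
    unfolding heat_kernel_def by (simp add: mult.assoc)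
  finally show ?thesis by simp
qed

lemma nn_normal: assumes "0 < s" shows "(\<integral>\<^sup>+x. ennreal (normal_density m s x) \<partial>lborel) = 1"
proof -
  have "(\<integral>x. normal_density m s x \<partial>lborel) = 1" using assms by (rule integral_normal_density)
  then show ?thesis using assms by (subst nn_integral_eq_integral) auto
qed

lemma time_int:
  assumes mu: "0 < \<mu>"
  shows "(\<integral>\<^sup>+r. ennreal (indicator {0<..} r * (exp (- \<mu> * r) / sqrt r)) \<partial>lborel) = ennreal (sqrt pi / sqrt \<mu>)"
proof -
  define g where "g t = indicator {0..} t * (t powr (1/2 - 1) / exp t)" for t :: real
  have G: "(\<integral>\<^sup>+t. ennreal (g t) \<partial>lborel) = ennreal (sqrt pi)"
  proof -
    have "((\<lambda>t::real. t powr (1/2 - 1) / exp t) has_integral Gamma (1/2::real)) {0..}"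
      by (rule Gamma_integral_real) simp
    then have "(\<integral>\<^sup>+t. ennreal (indicator {0..} t * (t powr (1/2 - 1) / exp t)) \<partial>lborel) = ennreal (Gamma (1/2))"
      by (intro nn_integral_has_integral_lebesgue) auto
    then show ?thesis unfolding g_def Gamma_one_half_real .
  qed
  have gm: "(\<lambda>t. ennreal (g t)) \<in> borel_measurable borel" unfolding g_def by measurable
  have pt: "g (0 + \<mu> * r) = (1 / sqrt \<mu>) * (indicator {0<..} r * (exp (- \<mu> * r) / sqrt r))" for r
  proof (cases "0 < r")
    case True
    have "(\<mu> * r) powr (1/2 - 1) = inverse ((\<mu> * r) powr (1/2))"
      using powr_minus[of "\<mu> * r" "1/2"] by simp
    also have "(\<mu> * r) powr (1/2) = sqrt \<mu> * sqrt r" using True mu by (simp add: powr_half_sqrt real_sqrt_mult)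
    finally show ?thesis using True mu unfolding g_def by (simp add: field_simps exp_minus)
  next
    case False
    then have "r < 0 \<or> r = 0" by auto
    moreover have "r < 0 \<Longrightarrow> \<mu> * r < 0" using mu by (simp add: mult_pos_neg)
    ultimately show ?thesis using mu False unfolding g_def by (auto simp: indicator_def)
  qed
  have "ennreal (sqrt pi) = ennreal \<bar>\<mu>\<bar> * (\<integral>\<^sup>+r. ennreal (g (0 + \<mu> * r)) \<partial>lborel)"
    using nn_integral_real_affine[OF gm, of \<mu> 0] mu G by simp
  also have "(\<integral>\<^sup>+r. ennreal (g (0 + \<mu> * r)) \<partial>lborel)
      = ennreal (1 / sqrt \<mu>) * (\<integral>\<^sup>+r. ennreal (indicator {0<..} r * (exp (- \<mu> * r) / sqrt r)) \<partial>lborel)"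
  proof -
    have nn: "0 \<le> indicator {0<..} r * (exp (- \<mu> * r) / sqrt r)" for r :: real
      by (cases "0 < r") auto
    have "ennreal (g (0 + \<mu> * r)) = ennreal (1 / sqrt \<mu>) * ennreal (indicator {0<..} r * (exp (- \<mu> * r) / sqrt r))" for r
      unfolding pt using nn[of r] mu by (intro ennreal_mult) auto
    then show ?thesis by (simp add: nn_integral_cmult)
  qed
  finally have eq: "ennreal (sqrt pi) = ennreal (\<mu> / sqrt \<mu>) * (\<integral>\<^sup>+r. ennreal (indicator {0<..} r * (exp (- \<mu> * r) / sqrt r)) \<partial>lborel)"
    using mu by (simp add: ennreal_mult[symmetric] mult.assoc[symmetric])
  have ms: "\<mu> / sqrt \<mu> = sqrt \<mu>" using mu by (metis real_div_sqrt less_imp_le)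
  define X where "X = (\<integral>\<^sup>+r. ennreal (indicator {0<..} r * (exp (- \<mu> * r) / sqrt r)) \<partial>lborel)"
  have "ennreal (sqrt pi) = ennreal (sqrt \<mu>) * X" using eq ms unfolding X_def by simp
  then have "ennreal (1 / sqrt \<mu>) * ennreal (sqrt pi) = ennreal (1 / sqrt \<mu>) * ennreal (sqrt \<mu>) * X" by (simp add: mult.assoc)
  also have "ennreal (1 / sqrt \<mu>) * ennreal (sqrt \<mu>) = 1" using mu by (simp add: ennreal_mult[symmetric])
  finally show ?thesis unfolding X_def using mu by (simp add: ennreal_mult[symmetric])
qed

lemma T_exp:
  assumes k: "0 < \<kappa>" and mu: "0 < \<beta> - \<kappa> * c^2 / 4" and t: "0 \<le> t"
  shows "(\<integral>\<^sup>+s. \<integral>\<^sup>+z. ennreal (indicator {0..<t} s * (heat_kernel \<kappa> (t - s) (z - x))^2) * ennreal (exp (\<beta> * s - c * z)) \<partial>lborel \<partial>lborel)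
     \<le> ennreal (exp (\<beta> * t - c * x) / sqrt (4 * \<kappa> * (\<beta> - \<kappa> * c^2 / 4)))"
proof -
  define \<mu> where "\<mu> = \<beta> - \<kappa> * c^2 / 4"
  have mu': "0 < \<mu>" using mu unfolding \<mu>_def .
  define E where "E = exp (\<beta> * t - c * x)"
  have E0: "0 < E" unfolding E_def by simp
  define Q where "Q s = indicator {0..<t} s * (E * (exp (- \<mu> * (t - s)) / (2 * sqrt (pi * \<kappa> * (t - s)))))" for s
  have inner: "(\<integral>\<^sup>+z. ennreal (indicator {0..<t} s * (heat_kernel \<kappa> (t - s) (z - x))^2) * ennreal (exp (\<beta> * s - c * z)) \<partial>lborel)
      = ennreal (Q s)" for s
  proof (cases "s \<in> {0..<t}")
    case False then show ?thesis unfolding Q_def by simp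
  next
    case True
    define r where "r = t - s"
    have r: "0 < r" using True unfolding r_def by auto
    define K where "K = exp (c^2 * \<kappa> * r / 4) / (2 * sqrt (pi * \<kappa> * r))"
    have K0: "0 \<le> K" unfolding K_def using k r by simp
    have f: "(\<lambda>z. ennreal (indicator {0..<t} s * (heat_kernel \<kappa> (t - s) (z - x))^2) * ennreal (exp (\<beta> * s - c * z)))
        = (\<lambda>z. ennreal ((heat_kernel \<kappa> r (z - x))^2 * exp (\<beta> * s - c * z)))"
      using True unfolding r_def by (intro ext) (simp add: ennreal_mult)
    have fm: "(\<lambda>z. ennreal ((heat_kernel \<kappa> r (z - x))^2 * exp (\<beta> * s - c * z))) \<in> borel_measurable borel"
      unfolding heat_kernel_def by measurable
    have "(\<integral>\<^sup>+z. ennreal ((heat_kernel \<kappa> r (z - x))^2 * exp (\<beta> * s - c * z)) \<partial>lborel)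
        = (\<integral>\<^sup>+w. ennreal ((heat_kernel \<kappa> r (x + 1 * w - x))^2 * exp (\<beta> * s - c * (x + 1 * w))) \<partial>lborel)"
      using nn_integral_real_affine[OF fm, of 1 x] by simp
    also have "\<dots> = (\<integral>\<^sup>+w. ennreal (exp (\<beta> * s - c * x) * K) * ennreal (normal_density (- c * \<kappa> * r / 2) (sqrt (\<kappa> * r / 2)) w) \<partial>lborel)"
    proof (rule nn_integral_cong)
      fix w :: real
      have "(heat_kernel \<kappa> r (x + 1 * w - x))^2 * exp (\<beta> * s - c * (x + 1 * w))
          = exp (\<beta> * s - c * x) * ((heat_kernel \<kappa> r w)^2 * exp (- c * w))"
      proof -
        have "\<beta> * s - c * (x + 1 * w) = (\<beta> * s - c * x) + (- c * w)" by (simp add: algebra_simps)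
        then have "exp (\<beta> * s - c * (x + 1 * w)) = exp (\<beta> * s - c * x) * exp (- c * w)"
          by (metis exp_add)
        then show ?thesis by simp
      qed
      also have "\<dots> = exp (\<beta> * s - c * x) * K * normal_density (- c * \<kappa> * r / 2) (sqrt (\<kappa> * r / 2)) w"
        unfolding hk_sq[OF k r] K_def by simp
      finally show "ennreal ((heat_kernel \<kappa> r (x + 1 * w - x))^2 * exp (\<beta> * s - c * (x + 1 * w)))
          = ennreal (exp (\<beta> * s - c * x) * K) * ennreal (normal_density (- c * \<kappa> * r / 2) (sqrt (\<kappa> * r / 2)) w)"
        using K0 by (simp add: ennreal_mult)
    qed
    also have "\<dots> = ennreal (exp (\<beta> * s - c * x) * K)"
      using nn_normal[of "sqrt (\<kappa> * r / 2)" "- c * \<kappa> * r / 2"] k r by (simp add: nn_integral_cmult)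
    also have "exp (\<beta> * s - c * x) * K = Q s"
    proof -
      have "\<beta> * s - c * x + c^2 * \<kappa> * r / 4 = (\<beta> * t - c * x) + (- \<mu> * (t - s))"
        unfolding \<mu>_def r_def by (simp add: algebra_simps)
      then have "exp (\<beta> * s - c * x) * exp (c^2 * \<kappa> * r / 4) = E * exp (- \<mu> * (t - s))"
        unfolding E_def by (metis exp_add)
      then show ?thesis unfolding K_def Q_def r_def using True by (simp add: field_simps)
    qed
    finally show ?thesis unfolding f .
  qed
  have Qm: "(\<lambda>s. ennreal (Q s)) \<in> borel_measurable borel" unfolding Q_def by measurable
  have "(\<integral>\<^sup>+s. ennreal (Q s) \<partial>lborel) = ennreal \<bar>-1\<bar> * (\<integral>\<^sup>+r. ennreal (Q (t + (-1) * r)) \<partial>lborel)"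
    by (rule nn_integral_real_affine[OF Qm]) simp
  also have "\<dots> \<le> (\<integral>\<^sup>+r. ennreal (E / (2 * sqrt (pi * \<kappa>))) * ennreal (indicator {0<..} r * (exp (- \<mu> * r) / sqrt r)) \<partial>lborel)"
  proof -
    have "ennreal (Q (t + (-1) * r)) \<le> ennreal (E / (2 * sqrt (pi * \<kappa>))) * ennreal (indicator {0<..} r * (exp (- \<mu> * r) / sqrt r))" for r
    proof (cases "0 < r \<and> r \<le> t")
      case True
      have "Q (t + (-1) * r) = E / (2 * sqrt (pi * \<kappa>)) * (indicator {0<..} r * (exp (- \<mu> * r) / sqrt r))"
        using True k unfolding Q_def by (simp add: real_sqrt_mult field_simps)
      moreover have "0 \<le> E / (2 * sqrt (pi * \<kappa>))" using E0 k by simp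
      moreover have "0 \<le> indicator {0<..} r * (exp (- \<mu> * r) / sqrt r)" using True by simp
      ultimately show ?thesis by (simp only: ennreal_mult[symmetric] order_refl)
    next
      case False
      then have "Q (t + (-1) * r) = 0" unfolding Q_def by auto
      then show ?thesis by simp
    qed
    then show ?thesis by (simp add: nn_integral_mono)
  qed
  also have "\<dots> = ennreal (E / (2 * sqrt (pi * \<kappa>))) * ennreal (sqrt pi / sqrt \<mu>)"
    using time_int[OF mu'] by (simp add: nn_integral_cmult)
  also have "\<dots> = ennreal (E / sqrt (4 * \<kappa> * \<mu>))"
  proof -
    have "E / (2 * sqrt (pi * \<kappa>)) * (sqrt pi / sqrt \<mu>) = E / sqrt (4 * \<kappa> * \<mu>)"
      using k mu' by (simp add: real_sqrt_mult field_simps)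
    then show ?thesis using E0 k mu' by (simp add: ennreal_mult[symmetric])
  qed
  finally show ?thesis unfolding inner E_def \<mu>_def .
qed



lemma heat_bound:
  assumes k: "0 < \<kappa>" and t: "0 \<le> t" and K: "\<forall>y. \<bar>exp (c * y / 2) * u0 y\<bar> \<le> K"
  shows "(heat_sg \<kappa> t u0 x)^2 \<le> K^2 * exp (\<kappa> * c^2 * t / 4 - c * x)"
proof -
  have K0: "0 \<le> K"
  proof -
    have "\<bar>exp (c * 0 / 2) * u0 0\<bar> \<le> K" using K by blast
    moreover have "0 \<le> \<bar>exp (c * 0 / 2) * u0 0\<bar>" by (rule abs_ge_zero)
    ultimately show ?thesis by linarith
  qed
  have ub: "\<bar>u0 y\<bar> \<le> K * exp (- c * y / 2)" for y
  proof -
    have "exp (c * y / 2) * \<bar>u0 y\<bar> \<le> K" using K[rule_format, of y] by (simp add: abs_mult)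
    then have "\<bar>u0 y\<bar> \<le> K / exp (c * y / 2)"
      by (subst pos_le_divide_eq) (auto simp: mult.commute[of _ "exp _"])
    moreover have "K / exp (c * y / 2) = K * exp (- c * y / 2)"
    proof -
      have e: "- c * y / 2 = - (c * y / 2)" by simp
      have "exp (- c * y / 2) = inverse (exp (c * y / 2))" unfolding e by (rule exp_minus)
      then show ?thesis by (simp only: divide_inverse)
    qed
    ultimately show ?thesis by simp
  qed
  have main: "\<bar>heat_sg \<kappa> t u0 x\<bar> \<le> K * exp (\<kappa> * c^2 * t / 8 - c * x / 2)"
  proof (cases "t = 0")
    case True
    have "heat_sg \<kappa> t u0 x = u0 x" using True by (simp add: heat_sg_def)
    moreover have "\<kappa> * c^2 * t / 8 - c * x / 2 = - c * x / 2" using True by simp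
    ultimately show ?thesis using ub[of x] by (simp only:)
  next
    case False
    then have tp: "0 < t" using t by simp
    define g where "g y = heat_kernel \<kappa> t (y - x) * u0 y" for y
    have "ennreal \<bar>heat_sg \<kappa> t u0 x\<bar> \<le> (\<integral>\<^sup>+y. ennreal \<bar>g y\<bar> \<partial>lborel)"
    proof (cases "integrable lborel g")
      case True
      then show ?thesis using integral_norm_bound_ennreal[OF True] False unfolding heat_sg_def g_def by simp
    next
      case nI: False
      then show ?thesis using False unfolding heat_sg_def g_def by (simp add: not_integrable_integral_eq)
    qed
    also have "\<dots> \<le> (\<integral>\<^sup>+y. ennreal (K * (heat_kernel \<kappa> t (y - x) * exp (- c * y / 2))) \<partial>lborel)"
    proof (rule nn_integral_mono)
      fix y
      have "\<bar>g y\<bar> = heat_kernel \<kappa> t (y - x) * \<bar>u0 y\<bar>" unfolding g_def using hk_nonneg[of \<kappa> t] k t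
        by (simp add: abs_mult)
      also have "\<dots> \<le> heat_kernel \<kappa> t (y - x) * (K * exp (- c * y / 2))"
        using ub[of y] hk_nonneg[of \<kappa> t] k t by (intro mult_left_mono) auto
      finally show "ennreal \<bar>g y\<bar> \<le> ennreal (K * (heat_kernel \<kappa> t (y - x) * exp (- c * y / 2)))"
        by (intro ennreal_leI) (simp add: algebra_simps)
    qed
    also have "\<dots> = ennreal (K * exp (\<kappa> * c^2 * t / 8 - c * x / 2))"
    proof -
      have fm: "(\<lambda>y. ennreal (K * (heat_kernel \<kappa> t (y - x) * exp (- c * y / 2)))) \<in> borel_measurable borel"
        unfolding heat_kernel_def by measurable
      have "(\<integral>\<^sup>+y. ennreal (K * (heat_kernel \<kappa> t (y - x) * exp (- c * y / 2))) \<partial>lborel)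
         = (\<integral>\<^sup>+w. ennreal (K * (heat_kernel \<kappa> t (x + 1 * w - x) * exp (- c * (x + 1 * w) / 2))) \<partial>lborel)"
        using nn_integral_real_affine[OF fm, of 1 x] by simp
      also have "\<dots> = (\<integral>\<^sup>+w. ennreal (K * exp (- c * x / 2) * exp (c^2 * \<kappa> * t / 8)) * ennreal (normal_density (- c * \<kappa> * t / 2) (sqrt (\<kappa> * t)) w) \<partial>lborel)"
      proof (rule nn_integral_cong)
        fix w :: real
        have "exp (- c * (x + 1 * w) / 2) = exp (- c * x / 2) * exp (- c * w / 2)"
        proof -
          have "- c * (x + 1 * w) / 2 = - c * x / 2 + - c * w / 2" by (simp add: field_simps)
          then show ?thesis by (metis exp_add)
        qed
        then have "K * (heat_kernel \<kappa> t (x + 1 * w - x) * exp (- c * (x + 1 * w) / 2))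
            = K * exp (- c * x / 2) * (heat_kernel \<kappa> t w * exp (- c * w / 2))" by simp
        also have "\<dots> = K * exp (- c * x / 2) * exp (c^2 * \<kappa> * t / 8) * normal_density (- c * \<kappa> * t / 2) (sqrt (\<kappa> * t)) w"
          unfolding hk_lin[OF k tp] by simp
        finally have eq: "K * (heat_kernel \<kappa> t (x + 1 * w - x) * exp (- c * (x + 1 * w) / 2))
            = (K * exp (- c * x / 2) * exp (c^2 * \<kappa> * t / 8)) * normal_density (- c * \<kappa> * t / 2) (sqrt (\<kappa> * t)) w" .
        show "ennreal (K * (heat_kernel \<kappa> t (x + 1 * w - x) * exp (- c * (x + 1 * w) / 2)))
            = ennreal (K * exp (- c * x / 2) * exp (c^2 * \<kappa> * t / 8)) * ennreal (normal_density (- c * \<kappa> * t / 2) (sqrt (\<kappa> * t)) w)"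
          unfolding eq by (rule ennreal_mult) (use K0 in auto)
      qed
      also have "\<dots> = ennreal (K * exp (- c * x / 2) * exp (c^2 * \<kappa> * t / 8))"
        using nn_normal[of "sqrt (\<kappa> * t)" "- c * \<kappa> * t / 2"] k tp by (simp add: nn_integral_cmult)
      also have "K * exp (- c * x / 2) * exp (c^2 * \<kappa> * t / 8) = K * exp (\<kappa> * c^2 * t / 8 - c * x / 2)"
      proof -
        have "\<kappa> * c^2 * t / 8 - c * x / 2 = - c * x / 2 + c^2 * \<kappa> * t / 8" by (simp add: field_simps)
        then have "exp (\<kappa> * c^2 * t / 8 - c * x / 2) = exp (- c * x / 2) * exp (c^2 * \<kappa> * t / 8)"
          by (simp only: exp_add)
        then show ?thesis by (simp only: mult.assoc)
      qed
      finally show ?thesis .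
    qed
    finally show ?thesis using K0 by (subst (asm) ennreal_le_iff) auto
  qed
  have "(heat_sg \<kappa> t u0 x)^2 = \<bar>heat_sg \<kappa> t u0 x\<bar>^2" by simp
  also have "\<dots> \<le> (K * exp (\<kappa> * c^2 * t / 8 - c * x / 2))^2"
    using main by (intro power_mono) auto
  also have "\<dots> = K^2 * exp (\<kappa> * c^2 * t / 4 - c * x)"
  proof -
    have "(exp (\<kappa> * c^2 * t / 8 - c * x / 2))^2 = exp (\<kappa> * c^2 * t / 4 - c * x)"
    proof -
      have "(exp (\<kappa> * c^2 * t / 8 - c * x / 2))^2 = exp ((\<kappa> * c^2 * t / 8 - c * x / 2) + (\<kappa> * c^2 * t / 8 - c * x / 2))"
        by (simp only: power2_eq_square exp_add)
      also have "(\<kappa> * c^2 * t / 8 - c * x / 2) + (\<kappa> * c^2 * t / 8 - c * x / 2) = \<kappa> * c^2 * t / 4 - c * x"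
        by (simp add: field_simps)
      finally show ?thesis .
    qed
    then show ?thesis by (simp add: power_mult_distrib)
  qed
  finally show ?thesis .
qed



lemma pred_meas:
  assumes W: "brownian_sheet M F W" and g: "g \<in> borel_measurable (predictable M F)"
  shows "g \<in> borel_measurable (lborel \<Otimes>\<^sub>M lborel \<Otimes>\<^sub>M M)"
proof -
  define \<Omega> where "\<Omega> = (UNIV :: real set) \<times> (UNIV :: real set) \<times> space M"
  define G where "G = {{(s, y::real, \<omega>). a < s \<and> s \<le> b \<and> y \<in> B \<and> \<omega> \<in> G'} | a b B G'. 0 \<le> a \<and> B \<in> sets borel \<and> G' \<in> F a}
      \<union> {{(s, y::real, \<omega>). s = 0 \<and> y \<in> B \<and> \<omega> \<in> G'} | B G'. B \<in> sets borel \<and> G' \<in> F 0}"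
  have P: "predictable M F = sigma \<Omega> G" unfolding predictable_def \<Omega>_def G_def ..
  have FS: "\<And>t. F t \<subseteq> sets M" using bs_Fsub[OF W] .
  have GN: "G \<subseteq> sets (lborel \<Otimes>\<^sub>M lborel \<Otimes>\<^sub>M M)"
  proof
    fix A assume "A \<in> G"
    then consider (a) a b B G' where "A = {(s, y, \<omega>). a < s \<and> s \<le> b \<and> y \<in> B \<and> \<omega> \<in> G'}" "B \<in> sets borel" "G' \<in> F a"
      | (b) B G' where "A = {(s, y, \<omega>). s = 0 \<and> y \<in> B \<and> \<omega> \<in> G'}" "B \<in> sets borel" "G' \<in> F 0"
      unfolding G_def by blast
    then show "A \<in> sets (lborel \<Otimes>\<^sub>M lborel \<Otimes>\<^sub>M M)"
    proof cases
      case a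
      then have "A = {a<..b} \<times> (B \<times> G')" by auto
      moreover have "G' \<in> sets M" using a FS by auto
      ultimately show ?thesis using a by auto
    next
      case b
      then have "A = {0} \<times> (B \<times> G')" by auto
      moreover have "G' \<in> sets M" using b FS by auto
      ultimately show ?thesis using b by auto
    qed
  qed
  have GP: "G \<subseteq> Pow \<Omega>"
  proof
    fix A assume "A \<in> G"
    then obtain G' t where "G' \<in> F t" "A \<subseteq> UNIV \<times> UNIV \<times> G'" unfolding G_def by blast
    moreover have "G' \<subseteq> space M" using \<open>G' \<in> F t\<close> FS sets.sets_into_space by blast
    ultimately show "A \<in> Pow \<Omega>" unfolding \<Omega>_def by auto
  qed
  have sp: "space (lborel \<Otimes>\<^sub>M lborel \<Otimes>\<^sub>M M) = \<Omega>" unfolding \<Omega>_def by (simp add: space_pair_measure)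
  have ss: "sigma_sets \<Omega> G \<subseteq> sets (lborel \<Otimes>\<^sub>M lborel \<Otimes>\<^sub>M M)"
    using sets.sigma_sets_subset[OF GN] sp by simp
  have spP: "space (predictable M F) = \<Omega>" unfolding P using GP by simp
  have stP: "sets (predictable M F) = sigma_sets \<Omega> G" unfolding P using GP by simp
  show ?thesis
    using g ss unfolding measurable_def spP stP sp by auto
qed

lemma tonelli3:
  fixes H :: "real \<times> real \<times> 'a \<Rightarrow> ennreal"
  assumes [measurable]: "H \<in> borel_measurable (lborel \<Otimes>\<^sub>M lborel \<Otimes>\<^sub>M M)" and sf: "sigma_finite_measure M"
  shows "(\<integral>\<^sup>+\<omega>. \<integral>\<^sup>+s. \<integral>\<^sup>+z. H (s, z, \<omega>) \<partial>lborel \<partial>lborel \<partial>M)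
       = (\<integral>\<^sup>+s. \<integral>\<^sup>+z. \<integral>\<^sup>+\<omega>. H (s, z, \<omega>) \<partial>M \<partial>lborel \<partial>lborel)"
proof -
  interpret M: sigma_finite_measure M by (rule sf)
  interpret p1: pair_sigma_finite lborel M by unfold_locales
  have m1: "(\<lambda>(s, \<omega>). \<integral>\<^sup>+z. H (s, z, \<omega>) \<partial>lborel) \<in> borel_measurable (lborel \<Otimes>\<^sub>M M)"
  proof -
    have "(\<lambda>(p, z). H (fst p, z, snd p)) \<in> borel_measurable ((lborel \<Otimes>\<^sub>M M) \<Otimes>\<^sub>M lborel)" by measurable
    then have "(\<lambda>p. \<integral>\<^sup>+z. H (fst p, z, snd p) \<partial>lborel) \<in> borel_measurable (lborel \<Otimes>\<^sub>M M)"
      by (rule lborel.borel_measurable_nn_integral)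
    then show ?thesis by (simp add: case_prod_beta')
  qed
  have "(\<integral>\<^sup>+\<omega>. \<integral>\<^sup>+s. \<integral>\<^sup>+z. H (s, z, \<omega>) \<partial>lborel \<partial>lborel \<partial>M)
      = (\<integral>\<^sup>+s. \<integral>\<^sup>+\<omega>. \<integral>\<^sup>+z. H (s, z, \<omega>) \<partial>lborel \<partial>M \<partial>lborel)"
    using p1.Fubini[OF m1] by simp
  also have "\<dots> = (\<integral>\<^sup>+s. \<integral>\<^sup>+z. \<integral>\<^sup>+\<omega>. H (s, z, \<omega>) \<partial>M \<partial>lborel \<partial>lborel)"
  proof (rule nn_integral_cong)
    fix s :: real
    have "(\<lambda>(z, \<omega>). H (s, z, \<omega>)) \<in> borel_measurable (lborel \<Otimes>\<^sub>M M)" by measurable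
    from p1.Fubini[OF this]
    show "(\<integral>\<^sup>+\<omega>. \<integral>\<^sup>+z. H (s, z, \<omega>) \<partial>lborel \<partial>M) = (\<integral>\<^sup>+z. \<integral>\<^sup>+\<omega>. H (s, z, \<omega>) \<partial>M \<partial>lborel)" by simp
  qed
  finally show ?thesis .
qed



lemma lip_L0: fixes \<sigma> :: "real \<Rightarrow> real" and L :: real shows "\<forall>x y. \<bar>\<sigma> x - \<sigma> y\<bar> \<le> L * \<bar>x - y\<bar> \<Longrightarrow> (0::real) \<le> L"
proof -
  assume "\<forall>x y. \<bar>\<sigma> x - \<sigma> y\<bar> \<le> L * \<bar>x - y\<bar>"
  then have "\<bar>\<sigma> 1 - \<sigma> 0\<bar> \<le> L * \<bar>1 - 0\<bar>" by blast
  then have "\<bar>\<sigma> 1 - \<sigma> 0\<bar> \<le> L" by simp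
  moreover have "0 \<le> \<bar>\<sigma> 1 - \<sigma> 0\<bar>" by (rule abs_ge_zero)
  ultimately show ?thesis by linarith
qed

lemma lip_meas:
  fixes \<sigma> :: "real \<Rightarrow> real" and L :: real
  assumes lip: "\<forall>x y. \<bar>\<sigma> x - \<sigma> y\<bar> \<le> L * \<bar>x - y\<bar>"
  shows "\<sigma> \<in> borel_measurable borel"
proof -
  have L0: "0 \<le> L" using lip_L0[OF lip] .
  have "continuous_on UNIV \<sigma>"
    unfolding continuous_on_iff
  proof (intro ballI allI impI)
    fix x :: real and e :: real assume "x \<in> UNIV" "0 < e"
    show "\<exists>d>0. \<forall>y\<in>UNIV. dist y x < d \<longrightarrow> dist (\<sigma> y) (\<sigma> x) < e"
    proof (intro exI[of _ "e / (L + 1)"] conjI ballI impI)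
      show "0 < e / (L + 1)" using \<open>0 < e\<close> L0 by simp
      fix y assume "dist y x < e / (L + 1)"
      then have d: "\<bar>y - x\<bar> < e / (L + 1)" by (simp add: dist_real_def)
      have "\<bar>\<sigma> y - \<sigma> x\<bar> \<le> L * \<bar>y - x\<bar>" using lip by blast
      also have "\<dots> \<le> L * (e / (L + 1))" using d L0 by (intro mult_left_mono) auto
      also have "\<dots> < e" using \<open>0 < e\<close> L0 by (simp add: field_simps)
      finally show "dist (\<sigma> y) (\<sigma> x) < e" by (simp add: dist_real_def)
    qed
  qed
  then show ?thesis by (rule borel_measurable_continuous_onI)
qed

lemma sigma_sq:
  fixes \<sigma> :: "real \<Rightarrow> real" and L v :: real
  assumes lip: "\<forall>x y. \<bar>\<sigma> x - \<sigma> y\<bar> \<le> L * \<bar>x - y\<bar>" and s0: "\<sigma> 0 = 0"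
  shows "(\<sigma> v)^2 \<le> L^2 * v^2"
proof -
  have "\<bar>\<sigma> v - \<sigma> 0\<bar> \<le> L * \<bar>v - 0\<bar>" using lip by blast
  then have "\<bar>\<sigma> v\<bar> \<le> L * \<bar>v\<bar>" using s0 by simp
  then have "\<bar>\<sigma> v\<bar>^2 \<le> (L * \<bar>v\<bar>)^2" by (intro power_mono) auto
  then show ?thesis by (simp add: power_mult_distrib)
qed

lemma cmult2:
  fixes G :: "real \<Rightarrow> real \<Rightarrow> ennreal"
  assumes Gm: "(\<lambda>(s, z). G s z) \<in> borel_measurable (lborel \<Otimes>\<^sub>M lborel)"
  shows "(\<integral>\<^sup>+s. \<integral>\<^sup>+z. c * G s z \<partial>lborel \<partial>lborel) = c * (\<integral>\<^sup>+s. \<integral>\<^sup>+z. G s z \<partial>lborel \<partial>lborel)"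
proof -
  have m1: "(\<lambda>z. G s z) \<in> borel_measurable lborel" for s
  proof -
    have "(\<lambda>z. (\<lambda>(s, z). G s z) (s, z)) \<in> borel_measurable lborel" using Gm by measurable
    then show ?thesis by simp
  qed
  have m2: "(\<lambda>s. \<integral>\<^sup>+z. G s z \<partial>lborel) \<in> borel_measurable lborel"
    using lborel.borel_measurable_nn_integral[OF Gm] by simp
  have "(\<integral>\<^sup>+s. \<integral>\<^sup>+z. c * G s z \<partial>lborel \<partial>lborel) = (\<integral>\<^sup>+s. c * \<integral>\<^sup>+z. G s z \<partial>lborel \<partial>lborel)"
    using m1 by (intro nn_integral_cong nn_integral_cmult) auto
  also have "\<dots> = c * (\<integral>\<^sup>+s. \<integral>\<^sup>+z. G s z \<partial>lborel \<partial>lborel)"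
    using m2 by (rule nn_integral_cmult)
  finally show ?thesis .
qed

lemma MI:
  fixes M :: "'a measure" and F :: "real \<Rightarrow> 'a set set" and W u :: "real \<Rightarrow> real \<Rightarrow> 'a \<Rightarrow> real"
    and \<kappa> L c \<beta> K \<delta> t x :: real and \<sigma> u0 :: "real \<Rightarrow> real"
  assumes k: "0 < \<kappa>" and lip: "\<forall>x y. \<bar>\<sigma> x - \<sigma> y\<bar> \<le> L * \<bar>x - y\<bar>" and s0: "\<sigma> 0 = 0"
    and W: "brownian_sheet M F W" and u: "mild_solution M F W \<kappa> \<sigma> u0 u"
    and K: "\<forall>y. \<bar>exp (c * y / 2) * u0 y\<bar> \<le> K" and bet: "\<kappa> * c^2 / 4 \<le> \<beta>"
    and d: "0 < \<delta>" and t: "0 \<le> t"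
  shows "(\<integral>\<^sup>+\<omega>. ennreal ((u t x \<omega>)^2) \<partial>M) \<le> ennreal ((1 + \<delta>) * K^2 * exp (\<beta> * t - c * x))
     + ennreal ((1 + 1/\<delta>) * L^2) * (\<integral>\<^sup>+s. \<integral>\<^sup>+z. ennreal (indicator {0..<t} s * (heat_kernel \<kappa> (t - s) (z - x))^2)
           * (\<integral>\<^sup>+\<omega>. ennreal ((u s z \<omega>)^2) \<partial>M) \<partial>lborel \<partial>lborel)"
proof -
  interpret prob_space M using W by (rule bs_prob)
  define ut where "ut = (\<lambda>(t, x, \<omega>). if 0 \<le> t then u t x \<omega> else 0)"
  have utm[measurable]: "ut \<in> borel_measurable (lborel \<Otimes>\<^sub>M lborel \<Otimes>\<^sub>M M)"
    using u pred_meas[OF W] unfolding mild_solution_def ut_def by blast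
  have sm[measurable]: "\<sigma> \<in> borel_measurable borel" using lip_meas[OF lip] .
  have L0: "0 \<le> L" using lip_L0[OF lip] .
  obtain I where SI: "stoch_int M F W (\<lambda>s y \<omega>. indicator {0..<t} s * heat_kernel \<kappa> (t - s) (y - x) * \<sigma> (u s y \<omega>)) I"
    and AE: "AE \<omega> in M. u t x \<omega> = heat_sg \<kappa> t u0 x + I \<omega>"
    using u t unfolding mild_solution_def by blast
  define f where "f s y \<omega> = indicator {0..<t} s * heat_kernel \<kappa> (t - s) (y - x) * \<sigma> (u s y \<omega>)" for s y \<omega>
  have f_eq: "f s y \<omega> = indicator {0..<t} s * heat_kernel \<kappa> (t - s) (y - x) * \<sigma> (ut (s, y, \<omega>))" for s y \<omega>
    unfolding f_def ut_def by (auto simp: indicator_def)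
  have fm: "(\<lambda>(s, y, \<omega>). f s y \<omega>) \<in> borel_measurable (lborel \<Otimes>\<^sub>M lborel \<Otimes>\<^sub>M M)"
    unfolding f_eq heat_kernel_def by measurable
  have Im: "I \<in> borel_measurable M" using SI unfolding stoch_int_def by blast
  define P where "P = heat_sg \<kappa> t u0 x"
  have P2: "P^2 \<le> K^2 * exp (\<beta> * t - c * x)"
  proof -
    have "P^2 \<le> K^2 * exp (\<kappa> * c^2 * t / 4 - c * x)" unfolding P_def by (rule heat_bound[OF k t K])
    also have "\<dots> \<le> K^2 * exp (\<beta> * t - c * x)"
    proof -
      have "\<kappa> * c^2 / 4 * t \<le> \<beta> * t" by (rule mult_right_mono[OF bet t])
      then have "\<kappa> * c^2 * t / 4 - c * x \<le> \<beta> * t - c * x" by simp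
      then show ?thesis by (intro mult_left_mono) auto
    qed
    finally show ?thesis .
  qed
  define Tv where "Tv = (\<integral>\<^sup>+s. \<integral>\<^sup>+z. ennreal (indicator {0..<t} s * (heat_kernel \<kappa> (t - s) (z - x))^2)
           * (\<integral>\<^sup>+\<omega>. ennreal ((u s z \<omega>)^2) \<partial>M) \<partial>lborel \<partial>lborel)"
  have I2: "(\<integral>\<^sup>+\<omega>. ennreal ((I \<omega>)^2) \<partial>M) \<le> ennreal (L^2) * Tv"
  proof -
    have "(\<integral>\<^sup>+\<omega>. ennreal ((I \<omega>)^2) \<partial>M) \<le> L3 M (\<lambda>(s, z, \<omega>). ennreal ((f s z \<omega>)^2))"
      using stoch_int_bound[OF W fm] SI unfolding f_def by blast
    also have "\<dots> \<le> L3 M (\<lambda>(s, z, \<omega>). ennreal (indicator {0..<t} s * (heat_kernel \<kappa> (t - s) (z - x))^2) * ennreal (L^2 * (ut (s, z, \<omega>))^2))"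
    proof (rule L3_mono)
      fix p :: "real \<times> real \<times> 'a"
      obtain s z \<omega> where p: "p = (s, z, \<omega>)" by (cases p) auto
      have "(f s z \<omega>)^2 = indicator {0..<t} s * (heat_kernel \<kappa> (t - s) (z - x))^2 * (\<sigma> (ut (s, z, \<omega>)))^2"
        unfolding f_eq by (simp add: power_mult_distrib indicator_def)
      also have "\<dots> \<le> indicator {0..<t} s * (heat_kernel \<kappa> (t - s) (z - x))^2 * (L^2 * (ut (s, z, \<omega>))^2)"
        by (intro mult_left_mono sigma_sq[OF lip s0]) auto
      finally show "(case p of (s, z, \<omega>) \<Rightarrow> ennreal ((f s z \<omega>)^2)) \<le>
          (case p of (s, z, \<omega>) \<Rightarrow> ennreal (indicator {0..<t} s * (heat_kernel \<kappa> (t - s) (z - x))^2) * ennreal (L^2 * (ut (s, z, \<omega>))^2))"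
        unfolding p by (simp add: ennreal_mult[symmetric] ennreal_leI)
    qed
    also have "\<dots> = (\<integral>\<^sup>+s. \<integral>\<^sup>+z. \<integral>\<^sup>+\<omega>. ennreal (indicator {0..<t} s * (heat_kernel \<kappa> (t - s) (z - x))^2) * ennreal (L^2 * (ut (s, z, \<omega>))^2) \<partial>M \<partial>lborel \<partial>lborel)"
    proof -
      have H: "(\<lambda>(s, z, \<omega>). ennreal (indicator {0..<t} s * (heat_kernel \<kappa> (t - s) (z - x))^2) * ennreal (L^2 * (ut (s, z, \<omega>))^2))
          \<in> borel_measurable (lborel \<Otimes>\<^sub>M lborel \<Otimes>\<^sub>M M)"
        unfolding heat_kernel_def by measurable
      show ?thesis using tonelli3[OF H sigma_finite_measure_axioms] unfolding L3_def by simp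
    qed
    also have "\<dots> = ennreal (L^2) * Tv"
    proof -
      have pw: "(\<integral>\<^sup>+\<omega>. ennreal (indicator {0..<t} s * (heat_kernel \<kappa> (t - s) (z - x))^2) * ennreal (L^2 * (ut (s, z, \<omega>))^2) \<partial>M)
          = ennreal (L^2) * (ennreal (indicator {0..<t} s * (heat_kernel \<kappa> (t - s) (z - x))^2) * (\<integral>\<^sup>+\<omega>. ennreal ((u s z \<omega>)^2) \<partial>M))" for s z
      proof (cases "s \<in> {0..<t}")
        case False then show ?thesis by simp
      next
        case True
        then have "ut (s, z, \<omega>) = u s z \<omega>" for \<omega> unfolding ut_def by simp
        then have "(\<integral>\<^sup>+\<omega>. ennreal (indicator {0..<t} s * (heat_kernel \<kappa> (t - s) (z - x))^2) * ennreal (L^2 * (ut (s, z, \<omega>))^2) \<partial>M)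
            = (\<integral>\<^sup>+\<omega>. (ennreal (indicator {0..<t} s * (heat_kernel \<kappa> (t - s) (z - x))^2) * ennreal (L^2)) * ennreal ((u s z \<omega>)^2) \<partial>M)"
          using L0 by (simp add: ennreal_mult mult.assoc)
        also have "\<dots> = (ennreal (indicator {0..<t} s * (heat_kernel \<kappa> (t - s) (z - x))^2) * ennreal (L^2)) * (\<integral>\<^sup>+\<omega>. ennreal ((u s z \<omega>)^2) \<partial>M)"
        proof (rule nn_integral_cmult)
          have "(\<lambda>\<omega>. ut (s, z, \<omega>)) \<in> borel_measurable M" by measurable
          moreover have "(\<lambda>\<omega>. ut (s, z, \<omega>)) = u s z" using \<open>\<And>\<omega>. ut (s, z, \<omega>) = u s z \<omega>\<close> by auto
          ultimately have um: "u s z \<in> borel_measurable M" by simp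
          show "(\<lambda>\<omega>. ennreal ((u s z \<omega>)^2)) \<in> borel_measurable M" using um by measurable
        qed
        finally show ?thesis by (simp add: ac_simps)
      qed
      have "(\<integral>\<^sup>+s. \<integral>\<^sup>+z. \<integral>\<^sup>+\<omega>. ennreal (indicator {0..<t} s * (heat_kernel \<kappa> (t - s) (z - x))^2) * ennreal (L^2 * (ut (s, z, \<omega>))^2) \<partial>M \<partial>lborel \<partial>lborel)
          = (\<integral>\<^sup>+s. \<integral>\<^sup>+z. ennreal (L^2) * (ennreal (indicator {0..<t} s * (heat_kernel \<kappa> (t - s) (z - x))^2) * (\<integral>\<^sup>+\<omega>. ennreal ((ut (s, z, \<omega>))^2) \<partial>M)) \<partial>lborel \<partial>lborel)"
      proof -
        have "ennreal (indicator {0..<t} s * (heat_kernel \<kappa> (t - s) (z - x))^2) * (\<integral>\<^sup>+\<omega>. ennreal ((u s z \<omega>)^2) \<partial>M)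
            = ennreal (indicator {0..<t} s * (heat_kernel \<kappa> (t - s) (z - x))^2) * (\<integral>\<^sup>+\<omega>. ennreal ((ut (s, z, \<omega>))^2) \<partial>M)" for s z
          by (cases "s \<in> {0..<t}") (auto simp: ut_def)
        then show ?thesis using pw by simp
      qed
      also have "\<dots> = ennreal (L^2) * (\<integral>\<^sup>+s. \<integral>\<^sup>+z. ennreal (indicator {0..<t} s * (heat_kernel \<kappa> (t - s) (z - x))^2) * (\<integral>\<^sup>+\<omega>. ennreal ((ut (s, z, \<omega>))^2) \<partial>M) \<partial>lborel \<partial>lborel)"
      proof (rule cmult2)
        have "(\<lambda>(p, \<omega>). ennreal ((ut (fst p, snd p, \<omega>))^2)) \<in> borel_measurable ((lborel \<Otimes>\<^sub>M lborel) \<Otimes>\<^sub>M M)" by measurable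
        then have vm: "(\<lambda>p. \<integral>\<^sup>+\<omega>. ennreal ((ut (fst p, snd p, \<omega>))^2) \<partial>M) \<in> borel_measurable (lborel \<Otimes>\<^sub>M lborel)"
          by (rule borel_measurable_nn_integral)
        show "(\<lambda>(s, z). ennreal (indicator {0..<t} s * (heat_kernel \<kappa> (t - s) (z - x))^2) * (\<integral>\<^sup>+\<omega>. ennreal ((ut (s, z, \<omega>))^2) \<partial>M))
            \<in> borel_measurable (lborel \<Otimes>\<^sub>M lborel)"
          using vm unfolding heat_kernel_def case_prod_beta' by measurable
      qed
      also have "\<dots> = ennreal (L^2) * Tv"
      proof -
        have "ennreal (indicator {0..<t} s * (heat_kernel \<kappa> (t - s) (z - x))^2) * (\<integral>\<^sup>+\<omega>. ennreal ((ut (s, z, \<omega>))^2) \<partial>M)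
            = ennreal (indicator {0..<t} s * (heat_kernel \<kappa> (t - s) (z - x))^2) * (\<integral>\<^sup>+\<omega>. ennreal ((u s z \<omega>)^2) \<partial>M)" for s z
          by (cases "s \<in> {0..<t}") (auto simp: ut_def)
        then show ?thesis unfolding Tv_def by simp
      qed
      finally show ?thesis .
    qed
    finally show ?thesis .
  qed
  have "(\<integral>\<^sup>+\<omega>. ennreal ((u t x \<omega>)^2) \<partial>M) = (\<integral>\<^sup>+\<omega>. ennreal ((P + I \<omega>)^2) \<partial>M)"
    using AE unfolding P_def by (intro nn_integral_cong_AE) auto
  also have "\<dots> \<le> (\<integral>\<^sup>+\<omega>. ennreal (1 + \<delta>) * ennreal (P^2) + ennreal (1 + 1/\<delta>) * ennreal ((I \<omega>)^2) \<partial>M)"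
  proof (rule nn_integral_mono)
    fix \<omega>
    show "ennreal ((P + I \<omega>)^2) \<le> ennreal (1 + \<delta>) * ennreal (P^2) + ennreal (1 + 1/\<delta>) * ennreal ((I \<omega>)^2)"
      using ennreal_sq_split[OF d, of "P + I \<omega>" P] by (simp add: power2_commute)
  qed
  also have "\<dots> = ennreal (1 + \<delta>) * ennreal (P^2) + ennreal (1 + 1/\<delta>) * (\<integral>\<^sup>+\<omega>. ennreal ((I \<omega>)^2) \<partial>M)"
    using Im by (subst nn_integral_add) (auto simp: nn_integral_cmult emeasure_space_1)
  also have "\<dots> \<le> ennreal (1 + \<delta>) * ennreal (P^2) + ennreal (1 + 1/\<delta>) * (ennreal (L^2) * Tv)"
    using I2 by (intro add_left_mono mult_left_mono) auto
  finally have "(\<integral>\<^sup>+\<omega>. ennreal ((u t x \<omega>)^2) \<partial>M) \<le> ennreal (1 + \<delta>) * ennreal (P^2) + ennreal (1 + 1/\<delta>) * (ennreal (L^2) * Tv)" .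
  also have "\<dots> \<le> ennreal ((1 + \<delta>) * K^2 * exp (\<beta> * t - c * x)) + ennreal ((1 + 1/\<delta>) * L^2) * Tv"
  proof -
    have "ennreal (1 + \<delta>) * ennreal (P^2) = ennreal ((1 + \<delta>) * P^2)" using d by (simp add: ennreal_mult)
    also have "\<dots> \<le> ennreal ((1 + \<delta>) * K^2 * exp (\<beta> * t - c * x))"
      using P2 d by (intro ennreal_leI) (auto simp: mult.assoc intro!: mult_left_mono)
    finally have 1: "ennreal (1 + \<delta>) * ennreal (P^2) \<le> ennreal ((1 + \<delta>) * K^2 * exp (\<beta> * t - c * x))" .
    have 2: "ennreal (1 + 1/\<delta>) * (ennreal (L^2) * Tv) = ennreal ((1 + 1/\<delta>) * L^2) * Tv"
      using d by (simp add: ennreal_mult mult.assoc)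
    show ?thesis using 1 2 by (auto intro: add_right_mono)
  qed
  finally show ?thesis unfolding Tv_def .
qed



lemma T_lin:
  assumes k: "0 < \<kappa>" and mu: "0 < \<beta> - \<kappa> * c^2 / 4" and g: "0 < \<gamma>" and t: "0 \<le> t"
    and A: "0 \<le> A" and B: "0 \<le> B"
  shows "(\<integral>\<^sup>+s. \<integral>\<^sup>+z. ennreal (indicator {0..<t} s * (heat_kernel \<kappa> (t - s) (z - x))^2)
            * (ennreal (A * exp (\<beta> * s - c * z)) + ennreal (B * exp (\<gamma> * s))) \<partial>lborel \<partial>lborel)
     \<le> ennreal (A * (exp (\<beta> * t - c * x) / sqrt (4 * \<kappa> * (\<beta> - \<kappa> * c^2 / 4))))
       + ennreal (B * (exp (\<gamma> * t) / sqrt (4 * \<kappa> * \<gamma>)))"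
proof -
  define h where "h s z = ennreal (indicator {0..<t} s * (heat_kernel \<kappa> (t - s) (z - x))^2)" for s z
  define e1 where "e1 s z = ennreal (exp (\<beta> * s - c * z))" for s z :: real
  define e2 where "e2 s z = ennreal (exp (\<gamma> * s - 0 * z))" for s z :: real
  have hm: "(\<lambda>(s, z). h s z) \<in> borel_measurable (lborel \<Otimes>\<^sub>M lborel)" unfolding h_def heat_kernel_def by measurable
  have m1: "(\<lambda>(s, z). h s z * e1 s z) \<in> borel_measurable (lborel \<Otimes>\<^sub>M lborel)"
    using hm unfolding e1_def case_prod_beta' by measurable
  have m2: "(\<lambda>(s, z). h s z * e2 s z) \<in> borel_measurable (lborel \<Otimes>\<^sub>M lborel)"
    using hm unfolding e2_def case_prod_beta' by measurable
  have sec: "(\<lambda>z. F s z) \<in> borel_measurable lborel" if "(\<lambda>(s, z). F s z) \<in> borel_measurable (lborel \<Otimes>\<^sub>M lborel)" for F :: "real \<Rightarrow> real \<Rightarrow> ennreal" and s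
  proof -
    have "(\<lambda>z. (\<lambda>(s, z). F s z) (s, z)) \<in> borel_measurable lborel" using that by measurable
    then show ?thesis by simp
  qed
  have int: "(\<lambda>s. \<integral>\<^sup>+z. F s z \<partial>lborel) \<in> borel_measurable lborel" if "(\<lambda>(s, z). F s z) \<in> borel_measurable (lborel \<Otimes>\<^sub>M lborel)" for F :: "real \<Rightarrow> real \<Rightarrow> ennreal"
    using lborel.borel_measurable_nn_integral[OF that] by simp
  have eq: "ennreal (indicator {0..<t} s * (heat_kernel \<kappa> (t - s) (z - x))^2)
            * (ennreal (A * exp (\<beta> * s - c * z)) + ennreal (B * exp (\<gamma> * s)))
          = ennreal A * (h s z * e1 s z) + ennreal B * (h s z * e2 s z)" for s z
    unfolding h_def e1_def e2_def using A B by (simp add: ennreal_mult distrib_left ac_simps)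
  have "(\<integral>\<^sup>+s. \<integral>\<^sup>+z. ennreal (indicator {0..<t} s * (heat_kernel \<kappa> (t - s) (z - x))^2)
            * (ennreal (A * exp (\<beta> * s - c * z)) + ennreal (B * exp (\<gamma> * s))) \<partial>lborel \<partial>lborel)
      = (\<integral>\<^sup>+s. ennreal A * (\<integral>\<^sup>+z. h s z * e1 s z \<partial>lborel) + ennreal B * (\<integral>\<^sup>+z. h s z * e2 s z \<partial>lborel) \<partial>lborel)"
    unfolding eq using sec[OF m1] sec[OF m2]
    by (intro nn_integral_cong) (simp add: nn_integral_add nn_integral_cmult)
  also have "\<dots> = ennreal A * (\<integral>\<^sup>+s. \<integral>\<^sup>+z. h s z * e1 s z \<partial>lborel \<partial>lborel) + ennreal B * (\<integral>\<^sup>+s. \<integral>\<^sup>+z. h s z * e2 s z \<partial>lborel \<partial>lborel)"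
    using int[OF m1] int[OF m2] by (simp add: nn_integral_add nn_integral_cmult)
  also have "\<dots> \<le> ennreal A * ennreal (exp (\<beta> * t - c * x) / sqrt (4 * \<kappa> * (\<beta> - \<kappa> * c^2 / 4)))
       + ennreal B * ennreal (exp (\<gamma> * t - 0 * x) / sqrt (4 * \<kappa> * (\<gamma> - \<kappa> * 0^2 / 4)))"
  proof (intro add_mono mult_left_mono)
    show "(\<integral>\<^sup>+s. \<integral>\<^sup>+z. h s z * e1 s z \<partial>lborel \<partial>lborel) \<le> ennreal (exp (\<beta> * t - c * x) / sqrt (4 * \<kappa> * (\<beta> - \<kappa> * c^2 / 4)))"
      unfolding h_def e1_def by (rule T_exp[OF k mu t])
    show "(\<integral>\<^sup>+s. \<integral>\<^sup>+z. h s z * e2 s z \<partial>lborel \<partial>lborel) \<le> ennreal (exp (\<gamma> * t - 0 * x) / sqrt (4 * \<kappa> * (\<gamma> - \<kappa> * 0^2 / 4)))"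
      unfolding h_def e2_def by (rule T_exp[OF k _ t]) (use g in simp)
  qed auto
  also have "\<dots> = ennreal (A * (exp (\<beta> * t - c * x) / sqrt (4 * \<kappa> * (\<beta> - \<kappa> * c^2 / 4))))
       + ennreal (B * (exp (\<gamma> * t) / sqrt (4 * \<kappa> * \<gamma>)))"
  proof -
    have n1: "0 \<le> exp (\<beta> * t - c * x) / sqrt (4 * \<kappa> * (\<beta> - \<kappa> * c^2 / 4))" using k mu by simp
    have n2: "0 \<le> exp (\<gamma> * t) / sqrt (4 * \<kappa> * \<gamma>)" using k g by simp
    show ?thesis using ennreal_mult[OF A n1] ennreal_mult[OF B n2] by simp
  qed
  finally show ?thesis .
qed

lemma iterate:
  fixes v :: "real \<Rightarrow> real \<Rightarrow> ennreal"
  assumes k: "0 < \<kappa>" and mu: "0 < \<beta> - \<kappa> * c^2 / 4" and g: "0 < \<gamma>"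
    and a: "0 \<le> a" and lam: "0 \<le> lam" and C: "0 \<le> C"
    and MI: "\<And>t x. 0 \<le> t \<Longrightarrow> v t x \<le> ennreal (a * exp (\<beta> * t - c * x)) + ennreal lam *
        (\<integral>\<^sup>+s. \<integral>\<^sup>+z. ennreal (indicator {0..<t} s * (heat_kernel \<kappa> (t - s) (z - x))^2) * v s z \<partial>lborel \<partial>lborel)"
    and bnd: "\<And>t x. 0 \<le> t \<Longrightarrow> t \<le> T \<Longrightarrow> v t x \<le> ennreal C"
  shows "0 \<le> t \<Longrightarrow> t \<le> T \<Longrightarrow> v t x \<le> ennreal (a * (\<Sum>i<n. (lam / sqrt (4 * \<kappa> * (\<beta> - \<kappa> * c^2 / 4)))^i) * exp (\<beta> * t - c * x))
      + ennreal (C * (lam / sqrt (4 * \<kappa> * \<gamma>))^n * exp (\<gamma> * t))"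
proof (induction n arbitrary: t x)
  case 0
  have "v t x \<le> ennreal C" using bnd 0 by auto
  also have "\<dots> \<le> ennreal (C * exp (\<gamma> * t))" using C g 0 by (intro ennreal_leI) (simp add: mult_le_cancel_left1)
  finally show ?case by simp
next
  case (Suc n)
  define \<rho> where "\<rho> = lam / sqrt (4 * \<kappa> * (\<beta> - \<kappa> * c^2 / 4))"
  define \<theta> where "\<theta> = lam / sqrt (4 * \<kappa> * \<gamma>)"
  define S where "S = (\<Sum>i<n. \<rho>^i)"
  have \<rho>0: "0 \<le> \<rho>" unfolding \<rho>_def using lam k mu by simp
  have \<theta>0: "0 \<le> \<theta>" unfolding \<theta>_def using lam k g by simp
  have S0: "0 \<le> S" unfolding S_def using \<rho>0 by (simp add: sum_nonneg)
  define A where "A = a * S"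
  define B where "B = C * \<theta>^n"
  have A0: "0 \<le> A" unfolding A_def using a S0 by simp
  have B0: "0 \<le> B" unfolding B_def using C \<theta>0 by simp
  have IH: "\<And>s z. 0 \<le> s \<Longrightarrow> s \<le> T \<Longrightarrow> v s z \<le> ennreal (A * exp (\<beta> * s - c * z)) + ennreal (B * exp (\<gamma> * s))"
    using Suc.IH unfolding A_def B_def S_def \<rho>_def \<theta>_def by (simp add: mult.assoc)
  define Tv where "Tv = (\<integral>\<^sup>+s. \<integral>\<^sup>+z. ennreal (indicator {0..<t} s * (heat_kernel \<kappa> (t - s) (z - x))^2) * v s z \<partial>lborel \<partial>lborel)"
  have "Tv \<le> (\<integral>\<^sup>+s. \<integral>\<^sup>+z. ennreal (indicator {0..<t} s * (heat_kernel \<kappa> (t - s) (z - x))^2)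
            * (ennreal (A * exp (\<beta> * s - c * z)) + ennreal (B * exp (\<gamma> * s))) \<partial>lborel \<partial>lborel)"
    unfolding Tv_def
  proof (intro nn_integral_mono)
    fix s z
    show "ennreal (indicator {0..<t} s * (heat_kernel \<kappa> (t - s) (z - x))^2) * v s z \<le>
        ennreal (indicator {0..<t} s * (heat_kernel \<kappa> (t - s) (z - x))^2) * (ennreal (A * exp (\<beta> * s - c * z)) + ennreal (B * exp (\<gamma> * s)))"
    proof (cases "s \<in> {0..<t}")
      case True
      then have "v s z \<le> ennreal (A * exp (\<beta> * s - c * z)) + ennreal (B * exp (\<gamma> * s))"
        using IH Suc.prems by auto
      then show ?thesis by (intro mult_left_mono) auto
    qed simp
  qed
  also have "\<dots> \<le> ennreal (A * (exp (\<beta> * t - c * x) / sqrt (4 * \<kappa> * (\<beta> - \<kappa> * c^2 / 4))))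
       + ennreal (B * (exp (\<gamma> * t) / sqrt (4 * \<kappa> * \<gamma>)))"
    by (rule T_lin[OF k mu g Suc.prems(1) A0 B0])
  finally have Tb: "Tv \<le> ennreal (A * (exp (\<beta> * t - c * x) / sqrt (4 * \<kappa> * (\<beta> - \<kappa> * c^2 / 4))))
       + ennreal (B * (exp (\<gamma> * t) / sqrt (4 * \<kappa> * \<gamma>)))" .
  define X where "X = A * (exp (\<beta> * t - c * x) / sqrt (4 * \<kappa> * (\<beta> - \<kappa> * c^2 / 4)))"
  define Y where "Y = B * (exp (\<gamma> * t) / sqrt (4 * \<kappa> * \<gamma>))"
  have X0: "0 \<le> X" unfolding X_def using A0 k mu by simp
  have Y0: "0 \<le> Y" unfolding Y_def using B0 k g by simp
  have "v t x \<le> ennreal (a * exp (\<beta> * t - c * x)) + ennreal lam * Tv"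
    using MI[OF Suc.prems(1)] unfolding Tv_def .
  also have "\<dots> \<le> ennreal (a * exp (\<beta> * t - c * x)) + ennreal lam * (ennreal X + ennreal Y)"
    using Tb unfolding X_def Y_def by (intro add_left_mono mult_left_mono) auto
  also have "\<dots> = ennreal (a * exp (\<beta> * t - c * x) + lam * X) + ennreal (lam * Y)"
    using a lam X0 Y0 by (simp add: ennreal_mult ennreal_plus distrib_left add.assoc)
  also have "a * exp (\<beta> * t - c * x) + lam * X = a * (\<Sum>i<Suc n. \<rho>^i) * exp (\<beta> * t - c * x)"
  proof -
    have "(\<Sum>i<Suc n. \<rho>^i) = 1 + \<rho> * S"
      unfolding S_def sum.lessThan_Suc_shift by (simp add: sum_distrib_left)
    then show ?thesis unfolding X_def A_def \<rho>_def by (simp add: algebra_simps)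
  qed
  also have "lam * Y = C * \<theta>^(Suc n) * exp (\<gamma> * t)"
    unfolding Y_def B_def \<theta>_def by (simp add: algebra_simps)
  finally show ?case unfolding \<rho>_def \<theta>_def .
qed



theorem proposition4p1:
  fixes M :: "'a measure" and F :: "real \<Rightarrow> 'a set set" and W u :: "real \<Rightarrow> real \<Rightarrow> 'a \<Rightarrow> real"
    and \<kappa> L c \<beta> :: real and \<sigma> u0 :: "real \<Rightarrow> real"
  assumes kappa: "\<kappa> > 0"
    and lip: "\<forall>x y. \<bar>\<sigma> x - \<sigma> y\<bar> \<le> L * \<bar>x - y\<bar>"
    and sigma0: "\<sigma> 0 = 0"
    and sigma_inf: "\<exists>\<epsilon>>0. \<forall>x. x \<noteq> 0 \<longrightarrow> \<epsilon> \<le> \<bar>\<sigma> x / x\<bar>"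
    and u0_meas: "u0 \<in> borel_measurable borel"
    and u0_nonneg: "\<forall>x. 0 \<le> u0 x"
    and u0_bdd: "\<exists>B. \<forall>x. \<bar>u0 x\<bar> \<le> B"
    and W: "brownian_sheet M F W"
    and u: "mild_solution M F W \<kappa> \<sigma> u0 u"
    and decay: "\<exists>K. \<forall>x. \<bar>exp (c * x / 2) * u0 x\<bar> \<le> K"
    and beta: "\<beta> > \<kappa> * c^2 / 4 + L^4 / (4 * \<kappa>)"
  shows "\<exists>A::real. \<forall>t\<ge>0. \<forall>x. (\<integral>\<^sup>+\<omega>. ennreal ((u t x \<omega>)^2) \<partial>M) \<le> ennreal (A * exp (\<beta> * t - c * x))"
proof -
  obtain K where K: "\<forall>x. \<bar>exp (c * x / 2) * u0 x\<bar> \<le> K" using decay by blast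
  have L0: "0 \<le> L" using lip_L0[OF lip] .
  define \<mu> where "\<mu> = \<beta> - \<kappa> * c^2 / 4"
  have L4: "L^4 < 4 * \<kappa> * \<mu>"
  proof -
    have h: "L^4 / (4 * \<kappa>) < \<mu>" using beta unfolding \<mu>_def by simp
    have k4: "0 < 4 * \<kappa>" using kappa by simp
    have "L^4 / (4 * \<kappa>) * (4 * \<kappa>) < \<mu> * (4 * \<kappa>)" using mult_strict_right_mono[OF h k4] .
    moreover have "L^4 / (4 * \<kappa>) * (4 * \<kappa>) = L^4" using k4 by simp
    ultimately show ?thesis by (simp add: ac_simps)
  qed
  have mu: "0 < \<mu>"
  proof -
    have "0 \<le> L^4" by simp
    then have "0 < 4 * \<kappa> * \<mu>" using L4 by linarith
    then show ?thesis using kappa by (simp add: zero_less_mult_iff)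
  qed
  define q where "q = L^2 / sqrt (4 * \<kappa> * \<mu>)"
  have sq: "0 < sqrt (4 * \<kappa> * \<mu>)" using kappa mu by simp
  have q0: "0 \<le> q" unfolding q_def using sq by simp
  have q1: "q < 1"
  proof -
    have "sqrt (L^4) < sqrt (4 * \<kappa> * \<mu>)" using L4 by (rule real_sqrt_less_mono)
    moreover have "sqrt (L^4) = L^2"
    proof -
      have e: "L^4 = (L^2)^2" by simp
      show ?thesis unfolding e real_sqrt_abs by simp
    qed
    ultimately show ?thesis unfolding q_def using sq by simp
  qed
  define \<delta> where "\<delta> = (q + 1) / (1 - q)"
  have d0: "0 < \<delta>" unfolding \<delta>_def using q0 q1 by simp
  define lam where "lam = (1 + 1/\<delta>) * L^2"
  have lam0: "0 \<le> lam" unfolding lam_def using d0 by simp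
  define \<rho> where "\<rho> = lam / sqrt (4 * \<kappa> * \<mu>)"
  have \<rho>eq: "\<rho> = 2 * q / (1 + q)"
  proof -
    have "1 + 1/\<delta> = 2 / (1 + q)" unfolding \<delta>_def using q0 q1 by (simp add: field_simps)
    then show ?thesis unfolding \<rho>_def lam_def q_def by simp
  qed
  have \<rho>0: "0 \<le> \<rho>" using \<rho>eq q0 by simp
  have \<rho>1: "\<rho> < 1"
  proof -
    have "2 * q / (1 + q) < 1" using q0 q1 by (subst divide_less_eq_1_pos) auto
    then show ?thesis using \<rho>eq by simp
  qed
  define a where "a = (1 + \<delta>) * K^2"
  have a0: "0 \<le> a" unfolding a_def using d0 by simp
  define \<gamma> where "\<gamma> = lam^2 / \<kappa> + 1"
  have g0: "0 < \<gamma>" unfolding \<gamma>_def using kappa by (simp add: add_nonneg_pos)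
  define \<theta> where "\<theta> = lam / sqrt (4 * \<kappa> * \<gamma>)"
  have \<theta>0: "0 \<le> \<theta>" unfolding \<theta>_def using lam0 kappa g0 by simp
  have \<theta>1: "\<theta> < 1"
  proof -
    have "4 * \<kappa> * \<gamma> = 4 * lam^2 + 4 * \<kappa>" unfolding \<gamma>_def using kappa by (simp add: field_simps)
    moreover have "0 \<le> lam^2" by simp
    ultimately have "lam^2 < 4 * \<kappa> * \<gamma>" using kappa by linarith
    then have "sqrt (lam^2) < sqrt (4 * \<kappa> * \<gamma>)" by (rule real_sqrt_less_mono)
    then have "lam < sqrt (4 * \<kappa> * \<gamma>)" using lam0 by simp
    then show ?thesis unfolding \<theta>_def using kappa g0 by simp
  qed
  have bet: "\<kappa> * c^2 / 4 \<le> \<beta>" using mu unfolding \<mu>_def by simp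
  have MI': "\<And>t x. 0 \<le> t \<Longrightarrow> (\<integral>\<^sup>+\<omega>. ennreal ((u t x \<omega>)^2) \<partial>M) \<le> ennreal (a * exp (\<beta> * t - c * x)) + ennreal lam *
        (\<integral>\<^sup>+s. \<integral>\<^sup>+z. ennreal (indicator {0..<t} s * (heat_kernel \<kappa> (t - s) (z - x))^2) * (\<integral>\<^sup>+\<omega>. ennreal ((u s z \<omega>)^2) \<partial>M) \<partial>lborel \<partial>lborel)"
    unfolding a_def lam_def using MI[OF kappa lip sigma0 W u K bet d0] by blast
  define A where "A = a / (1 - \<rho>)"
  show ?thesis
  proof (intro exI[of _ A] allI impI)
    fix t x :: real assume t: "0 \<le> t"
    obtain C0 where C0: "\<forall>t'\<in>{0..t}. \<forall>x. (\<integral>\<^sup>+\<omega>. ennreal ((u t' x \<omega>)^2) \<partial>M) \<le> ennreal C0"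
      using u t unfolding mild_solution_def by blast
    define C where "C = max C0 0"
    have C: "0 \<le> C" unfolding C_def by simp
    have bnd: "\<And>t' x. 0 \<le> t' \<Longrightarrow> t' \<le> t \<Longrightarrow> (\<integral>\<^sup>+\<omega>. ennreal ((u t' x \<omega>)^2) \<partial>M) \<le> ennreal C"
    proof -
      fix t' x :: real assume "0 \<le> t'" "t' \<le> t"
      then have "(\<integral>\<^sup>+\<omega>. ennreal ((u t' x \<omega>)^2) \<partial>M) \<le> ennreal C0" using C0 by auto
      also have "\<dots> \<le> ennreal C" unfolding C_def by (intro ennreal_leI) simp
      finally show "(\<integral>\<^sup>+\<omega>. ennreal ((u t' x \<omega>)^2) \<partial>M) \<le> ennreal C" .
    qed
    have mu': "0 < \<beta> - \<kappa> * c^2 / 4" using mu unfolding \<mu>_def .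
    have it: "(\<integral>\<^sup>+\<omega>. ennreal ((u t x \<omega>)^2) \<partial>M) \<le> ennreal (a * (\<Sum>i<n. \<rho>^i) * exp (\<beta> * t - c * x))
      + ennreal (C * \<theta>^n * exp (\<gamma> * t))" for n
      using iterate[where v="\<lambda>t x. (\<integral>\<^sup>+\<omega>. ennreal ((u t x \<omega>)^2) \<partial>M)", OF kappa mu' g0 a0 lam0 C MI' bnd t order_refl]
      unfolding \<rho>_def \<theta>_def \<mu>_def by simp
    define E where "E = exp (\<beta> * t - c * x)"
    have E0: "0 \<le> E" unfolding E_def by simp
    have it2: "(\<integral>\<^sup>+\<omega>. ennreal ((u t x \<omega>)^2) \<partial>M) \<le> ennreal (A * E) + ennreal (C * \<theta>^n * exp (\<gamma> * t))" for n
    proof -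
      have "(\<Sum>i<n. \<rho>^i) = (1 - \<rho>^n) / (1 - \<rho>)" using sum_gp_strict[of \<rho> n] \<rho>1 by simp
      also have "\<dots> \<le> 1 / (1 - \<rho>)" using \<rho>0 \<rho>1 by (intro divide_right_mono) auto
      finally have "a * (\<Sum>i<n. \<rho>^i) * E \<le> a * (1 / (1 - \<rho>)) * E"
        using a0 E0 by (intro mult_right_mono mult_left_mono) auto
      then have "ennreal (a * (\<Sum>i<n. \<rho>^i) * E) \<le> ennreal (A * E)" unfolding A_def by (intro ennreal_leI) simp
      then have "ennreal (a * (\<Sum>i<n. \<rho>^i) * E) + ennreal (C * \<theta>^n * exp (\<gamma> * t))
          \<le> ennreal (A * E) + ennreal (C * \<theta>^n * exp (\<gamma> * t))" by (rule add_right_mono)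
      with it[of n] show ?thesis unfolding E_def by (rule order_trans)
    qed
    have lim: "(\<lambda>n. ennreal (A * E) + ennreal (C * \<theta>^n * exp (\<gamma> * t))) \<longlonglongrightarrow> ennreal (A * E) + ennreal (C * 0 * exp (\<gamma> * t))"
      using \<theta>0 \<theta>1 by (intro tendsto_add tendsto_const tendsto_ennrealI tendsto_mult LIMSEQ_power_zero) auto
    have "(\<integral>\<^sup>+\<omega>. ennreal ((u t x \<omega>)^2) \<partial>M) \<le> ennreal (A * E) + ennreal (C * 0 * exp (\<gamma> * t))"
      using it2 by (intro LIMSEQ_le_const[OF lim]) auto
    then show "(\<integral>\<^sup>+\<omega>. ennreal ((u t x \<omega>)^2) \<partial>M) \<le> ennreal (A * exp (\<beta> * t - c * x))"
      unfolding E_def by simp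
  qed
qed

end
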